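(* Let $P\in\mathbb R^3$. There exist finite constants $c_a,c_b>0$ such that for all $n,m\in\mathbb N$, all $g$ with $|g|\le1$ and $|g|<1/c_a$, and all $\psi\in D(H_{P,0}^{1/2})$, $$\langle\psi,H_{P,0}\psi\rangle\le\frac{1}{1-|g|c_a}\Big[\langle\psi,H'_P|^n_m\psi\rangle+|g|c_b\langle\psi,\psi\rangle\Big],$$ where $\langle\psi,H'_P|^n_m\psi\rangle$ is understood in the sense of quadratic forms.
   Context: $\mathcal F$ is the bosonic Fock space over $L^2(\mathbb R^3,dk)$ with $b(k),b^*(k)$ satisfying the canonical commutation relations. $\omega(k)=|k|$, $\rho(k)=(2\pi)^{-3/2}(2|k|)^{-1/2}$, $H^f=\int\omega b^*b\,dk$, $P^f=\int k\,b^*b\,dk$, $H_{P,0}=\frac12(P-P^f)^2+H^f$, $\Phi|^\Lambda_\tau=\int_{\tau\le|k|<\Lambda}\rho(k)(b(k)+b^*(k))dk$. Fix $1<\kappa<2$, $g\in\mathbb R$, $\beta>1$, $0<\gamma<\frac12$, $\sigma_n=\kappa\beta^n$, $\tau_m=\kappa\gamma^m$. With $\beta_G(k)=-g\rho(k)/(\frac12|k|^2+|k|)$ and $B|^n_0=\int_{\kappa\le|k|<\sigma_n}k\beta_G(k)b(k)dk$ (adjoint $B^*|^n_0$), $H'_P|^n_0=\frac12(P-P^f)^2+H^f+\frac12[(B|^n_0)^2+(B^*|^n_0)^2]+B^*|^n_0\cdot B|^n_0-(P-P^f)\cdot B|^n_0-B^*|^n_0\cdot(P-P^f)$ and $H'_P|^n_m=H'_P|^n_0+g\Phi|^\kappa_{\tau_m}$.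 *)

theory Defs
  imports "HOL-Analysis.Analysis"
begin

text \<open>Concrete model of the bosonic Fock space over L^2(R^3): a Fock vector is a
sequence psi of n-particle wave functions psi n, each a function of a configuration
x :: nat => real^3 (only the coordinates x 0, ..., x (n-1) matter), symmetric,
measurable and square integrable w.r.t. the product Lebesgue measure, with
summable squared norms.\<close>

type_synonym config = "nat \<Rightarrow> real^3"
type_synonym fock = "nat \<Rightarrow> config \<Rightarrow> complex"

definition cfg_measure :: "nat \<Rightarrow> config measure" where
  "cfg_measure n = PiM {..<n} (\<lambda>_. lborel)"

definition fock_vec :: "fock \<Rightarrow> bool" where
  "fock_vec psi \<longleftrightarrow>
     (\<forall>n. psi n \<in> borel_measurable (cfg_measure n)
        \<and> integrable (cfg_measure n) (\<lambda>x. (cmod (psi n x))\<^sup>2)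
        \<and> (\<forall>p x. p permutes {..<n} \<longrightarrow> x \<in> space (cfg_measure n) \<longrightarrow> psi n (x \<circ> p) = psi n x))
     \<and> summable (\<lambda>n. \<integral>x. (cmod (psi n x))\<^sup>2 \<partial>cfg_measure n)"

definition fock_inner :: "fock \<Rightarrow> fock \<Rightarrow> complex" where
  "fock_inner phi psi = (\<Sum>n. \<integral>x. cnj (phi n x) * psi n x \<partial>cfg_measure n)"

definition fock_normsq :: "fock \<Rightarrow> real" where
  "fock_normsq psi = (\<Sum>n. \<integral>x. (cmod (psi n x))\<^sup>2 \<partial>cfg_measure n)"

definition kcons :: "real^3 \<Rightarrow> config \<Rightarrow> nat \<Rightarrow> config" where
  "kcons k x n = restrict (\<lambda>i. if i = 0 then k else x (i - 1)) {..<Suc n}"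

definition ann :: "(real^3 \<Rightarrow> complex) \<Rightarrow> fock \<Rightarrow> fock" where
  "ann f psi = (\<lambda>n x. complex_of_real (sqrt (real n + 1)) *
       (\<integral>k. f k * psi (Suc n) (kcons k x n) \<partial>lborel))"

definition Pf :: "nat \<Rightarrow> config \<Rightarrow> real^3" where
  "Pf n x = (\<Sum>i<n. x i)"

definition mulPPf :: "real^3 \<Rightarrow> 3 \<Rightarrow> fock \<Rightarrow> fock" where
  "mulPPf P j psi = (\<lambda>n x. complex_of_real ((P - Pf n x) $ j) * psi n x)"

text \<open>quadratic form of H_{P,0} = (P-P^f)^2/2 + H^f (value infinity outside the form
  domain D(H_{P,0}^{1/2}))\<close>
definition H0_form :: "real^3 \<Rightarrow> fock \<Rightarrow> ennreal" where
  "H0_form P psi = (\<Sum>n. \<integral>\<^sup>+ x. ennreal ((1/2 * (norm (P - Pf n x))\<^sup>2 + (\<Sum>i<n. norm (x i)))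
                                   * (cmod (psi n x))\<^sup>2) \<partial>cfg_measure n)"

definition rho :: "real^3 \<Rightarrow> real" where
  "rho k = (2 * pi) powr (-3/2) * (2 * norm k) powr (-1/2)"

definition betaG :: "real \<Rightarrow> real^3 \<Rightarrow> real" where
  "betaG g k = - g * rho k / (1/2 * (norm k)\<^sup>2 + norm k)"

definition fB :: "real \<Rightarrow> real \<Rightarrow> real \<Rightarrow> 3 \<Rightarrow> real^3 \<Rightarrow> complex" where
  "fB g kappa s j k = (if kappa \<le> norm k \<and> norm k < s then complex_of_real (k $ j * betaG g k) else 0)"

definition fPhi :: "real \<Rightarrow> real \<Rightarrow> real^3 \<Rightarrow> complex" where
  "fPhi tau Lam k = (if tau \<le> norm k \<and> norm k < Lam then complex_of_real (rho k) else 0)"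

text \<open>Quadratic form of H'_P|^n_m, with sig = sigma_n and tau = tau_m:
  <psi,H_{P,0}psi> + 1/2(<psi,B^2 psi> + <psi,B^*^2 psi>) + <psi,B^*.B psi>
  - <psi,(P-P^f).B psi> - <psi,B^*.(P-P^f) psi> + g <psi, Phi|^kappa_tau psi>,
  where each term is written out via the adjoint relations:
  <psi,B^*^2 psi> = conj <psi,B^2 psi>, <psi,B^*.B psi> = sum_j ||B_j psi||^2,
  <psi,B^*.(P-P^f)psi> = conj <psi,(P-P^f).B psi>, <psi,Phi psi> = 2 Re <psi,b(rho 1) psi>.\<close>
definition Hprime_form :: "real \<Rightarrow> real \<Rightarrow> real \<Rightarrow> real \<Rightarrow> real^3 \<Rightarrow> fock \<Rightarrow> real" where
  "Hprime_form g kappa sig tau P psi =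
     enn2real (H0_form P psi)
     + (\<Sum>j\<in>UNIV. Re (fock_inner psi (ann (fB g kappa sig j) (ann (fB g kappa sig j) psi))))
     + (\<Sum>j\<in>UNIV. fock_normsq (ann (fB g kappa sig j) psi))
     - 2 * (\<Sum>j\<in>UNIV. Re (fock_inner psi (mulPPf P j (ann (fB g kappa sig j) psi))))
     + g * (2 * Re (fock_inner psi (ann (fPhi tau kappa) psi)))"

end

theory Submission
  imports Defs "HOL-Analysis.Analysis"
begin


abbreviation "M \<equiv> cfg_measure"

lemma psf: "product_sigma_finite (\<lambda>_::nat. (lborel :: (real^3) measure))"
  by (simp add: product_sigma_finite_def sigma_finite_lborel)

lemma space_M: "space (M n) = PiE {..<n} (\<lambda>_. UNIV)"
  by (simp add: cfg_measure_def space_PiM)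

lemma comp_perm_space:
  assumes p: "p permutes {..<n}" and y: "y \<in> space (M n)"
  shows "y \<circ> p \<in> space (M n)"
proof -
  have "\<forall>i. i \<notin> {..<n} \<longrightarrow> (y \<circ> p) i = undefined"
  proof (intro allI impI)
    fix i assume i: "i \<notin> {..<n}"
    then have "p i = i" using p by (simp add: permutes_def)
    then show "(y \<circ> p) i = undefined" using y i by (simp add: space_M PiE_iff extensional_def)
  qed
  then show ?thesis by (simp add: space_M PiE_iff extensional_def)
qed

lemma meas_comp_perm:
  assumes p: "p permutes {..<n}"
  shows "(\<lambda>y. y \<circ> p) \<in> measurable (M n) (M n)"
proof -
  have "(\<lambda>y. \<lambda>i\<in>{..<n}. y (p i)) \<in> measurable (M n) (M n)"
    unfolding cfg_measure_def
  proof (rule measurable_restrict)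
    fix i assume "i \<in> {..<n}"
    then have "p i \<in> {..<n}" using p by (metis permutes_in_image)
    then show "(\<lambda>y. y (p i)) \<in> measurable (Pi\<^sub>M {..<n} (\<lambda>_. lborel)) (lborel :: (real^3) measure)"
      by (rule measurable_component_singleton)
  qed
  moreover have "\<And>y. y \<in> space (M n) \<Longrightarrow> (\<lambda>i\<in>{..<n}. y (p i)) = y \<circ> p"
  proof
    fix y i assume y: "y \<in> space (M n)"
    have "y \<circ> p \<in> space (M n)" using comp_perm_space[OF p y] .
    then show "(\<lambda>i\<in>{..<n}. y (p i)) i = (y \<circ> p) i"
      by (cases "i < n") (auto simp: space_M PiE_iff extensional_def)
  qed
  ultimately show ?thesis using measurable_cong[of "M n" "\<lambda>y. \<lambda>i\<in>{..<n}. y (p i)" "\<lambda>y. y \<circ> p"] by simp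
qed

lemma distr_perm:
  assumes p: "p permutes {..<n}"
  shows "distr (M n) (M n) (\<lambda>y. y \<circ> p) = M n"
proof -
  interpret product_sigma_finite "\<lambda>_::nat. (lborel :: (real^3) measure)" by (rule psf)
  show ?thesis unfolding cfg_measure_def
  proof (rule PiM_eqI)
    show "finite {..<n}" by simp
    show "sets (distr (Pi\<^sub>M {..<n} (\<lambda>_. lborel)) (Pi\<^sub>M {..<n} (\<lambda>_. lborel)) (\<lambda>y. y \<circ> p)) = sets (Pi\<^sub>M {..<n} (\<lambda>_. lborel))"
      by simp
    fix A assume A: "\<And>i. i \<in> {..<n} \<Longrightarrow> A i \<in> sets (lborel :: (real^3) measure)"
    have mp: "(\<lambda>y. y \<circ> p) \<in> measurable (Pi\<^sub>M {..<n} (\<lambda>_. lborel)) (Pi\<^sub>M {..<n} (\<lambda>_. (lborel :: (real^3) measure)))"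
      using meas_comp_perm[OF p] by (simp add: cfg_measure_def)
    have inv: "inv p permutes {..<n}" using p by (rule permutes_inv)
    have pre: "(\<lambda>y. y \<circ> p) -` (Pi\<^sub>E {..<n} A) \<inter> space (Pi\<^sub>M {..<n} (\<lambda>_. (lborel :: (real^3) measure)))
          = Pi\<^sub>E {..<n} (\<lambda>j. A (inv p j))"
    proof (intro set_eqI iffI)
      fix y assume "y \<in> (\<lambda>y. y \<circ> p) -` (Pi\<^sub>E {..<n} A) \<inter> space (Pi\<^sub>M {..<n} (\<lambda>_. (lborel :: (real^3) measure)))"
      then have y1: "y \<circ> p \<in> Pi\<^sub>E {..<n} A" and y2: "y \<in> PiE {..<n} (\<lambda>_. UNIV)"
        by (auto simp: space_PiM)
      show "y \<in> Pi\<^sub>E {..<n} (\<lambda>j. A (inv p j))"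
      proof -
        have "\<And>j. j < n \<Longrightarrow> y j \<in> A (inv p j)"
        proof -
          fix j assume j: "j < n"
          have "inv p j < n" using permutes_in_image[OF inv] j by simp
          then have "(y \<circ> p) (inv p j) \<in> A (inv p j)" using PiE_mem[OF y1, of "inv p j"] by simp
          then show "y j \<in> A (inv p j)" using permutes_inverses(1)[OF p] by simp
        qed
        then show ?thesis using y2 by (auto simp: PiE_def extensional_def)
      qed
    next
      fix y assume y: "y \<in> Pi\<^sub>E {..<n} (\<lambda>j. A (inv p j))"
      have "\<And>i. i < n \<Longrightarrow> y (p i) \<in> A i"
      proof -
        fix i assume i: "i < n"
        have "p i < n" using permutes_in_image[OF p] i by simp
        then have "y (p i) \<in> A (inv p (p i))" using PiE_mem[OF y, of "p i"] by simp
        then show "y (p i) \<in> A i" using permutes_inverses(2)[OF p] by simp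
      qed
      moreover have "\<And>i. i \<notin> {..<n} \<Longrightarrow> p i = i" using p by (simp add: permutes_def)
      ultimately show "y \<in> (\<lambda>y. y \<circ> p) -` (Pi\<^sub>E {..<n} A) \<inter> space (Pi\<^sub>M {..<n} (\<lambda>_. (lborel :: (real^3) measure)))"
        using y by (auto simp: space_PiM PiE_def extensional_def)
    qed
    have "emeasure (distr (Pi\<^sub>M {..<n} (\<lambda>_. lborel)) (Pi\<^sub>M {..<n} (\<lambda>_. lborel)) (\<lambda>y. y \<circ> p)) (Pi\<^sub>E {..<n} A)
       = emeasure (Pi\<^sub>M {..<n} (\<lambda>_. lborel)) (Pi\<^sub>E {..<n} (\<lambda>j. A (inv p j)))"
      using A mp by (subst emeasure_distr) (auto simp: pre intro!: sets_PiM_I_finite)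
    also have "\<dots> = (\<Prod>j<n. emeasure lborel (A (inv p j)))"
    proof -
      have "\<And>i. i < n \<Longrightarrow> inv p i < n" using permutes_in_image[OF inv] by simp
      then show ?thesis using A by (subst emeasure_PiM) auto
    qed
    also have "\<dots> = (\<Prod>i<n. emeasure lborel (A i))"
      using prod.permute[OF inv, of "\<lambda>i. emeasure lborel (A i)"] by (simp add: comp_def)
    finally show "emeasure (distr (Pi\<^sub>M {..<n} (\<lambda>_. lborel)) (Pi\<^sub>M {..<n} (\<lambda>_. lborel)) (\<lambda>y. y \<circ> p)) (Pi\<^sub>E {..<n} A)
       = (\<Prod>i\<in>{..<n}. emeasure lborel (A i))" by simp
  qed
qed

lemma nn_perm:
  assumes p: "p permutes {..<n}" and h: "h \<in> borel_measurable (M n)"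
  shows "(\<integral>\<^sup>+y. h (y \<circ> p) \<partial>M n) = (\<integral>\<^sup>+y. h y \<partial>M n)"
proof -
  have "(\<integral>\<^sup>+y. h y \<partial>M n) = (\<integral>\<^sup>+y. h y \<partial>distr (M n) (M n) (\<lambda>y. y \<circ> p))"
    by (simp add: distr_perm[OF p])
  also have "\<dots> = (\<integral>\<^sup>+y. h (y \<circ> p) \<partial>M n)"
    using h meas_comp_perm[OF p] by (subst nn_integral_distr) auto
  finally show ?thesis by simp
qed


definition cyc :: "nat \<Rightarrow> nat \<Rightarrow> nat" where
  "cyc n i = (if i = 0 then n else if i \<le> n then i - 1 else i)"

lemma cyc_permutes: "cyc n permutes {..<Suc n}"
proof (rule bij_imp_permutes)
  show "bij_betw (cyc n) {..<Suc n} {..<Suc n}"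
    by (rule bij_betw_byWitness[where f'="\<lambda>i. if i = n then 0 else if i < n then i+1 else i"])
       (auto simp: cyc_def)
  show "\<And>x. x \<notin> {..<Suc n} \<Longrightarrow> cyc n x = x" by (auto simp: cyc_def)
qed

lemma kcons_eq:
  assumes "x \<in> space (M n)"
  shows "kcons k x n = (x(n:=k)) \<circ> cyc n"
proof
  fix i
  show "kcons k x n i = ((x(n:=k)) \<circ> cyc n) i"
    using assms by (auto simp: kcons_def cyc_def space_M PiE_def extensional_def)
qed

lemma kcons_space: "kcons k x n \<in> space (M (Suc n))"
  by (auto simp: kcons_def space_M)

lemma nn_kcons:
  assumes h: "h \<in> borel_measurable (M (Suc n))"
  shows "(\<integral>\<^sup>+y. h y \<partial>M (Suc n)) = (\<integral>\<^sup>+x. (\<integral>\<^sup>+k. h (kcons k x n) \<partial>lborel) \<partial>M n)"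
proof -
  interpret product_sigma_finite "\<lambda>_::nat. (lborel :: (real^3) measure)" by (rule psf)
  have hc: "(\<lambda>y. h (y \<circ> cyc n)) \<in> borel_measurable (M (Suc n))"
    using measurable_comp[OF meas_comp_perm[OF cyc_permutes] h] by (simp add: comp_def)
  have "(\<integral>\<^sup>+y. h y \<partial>M (Suc n)) = (\<integral>\<^sup>+y. h (y \<circ> cyc n) \<partial>M (Suc n))"
    using nn_perm[OF cyc_permutes h] by simp
  also have "\<dots> = (\<integral>\<^sup>+x. (\<integral>\<^sup>+k. h ((x(n:=k)) \<circ> cyc n) \<partial>lborel) \<partial>M n)"
  proof -
    have e: "{..<Suc n} = insert n {..<n}" by auto
    show ?thesis
      using product_nn_integral_insert[of "{..<n}" n "\<lambda>y. h (y \<circ> cyc n)"] hc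
      by (simp add: cfg_measure_def e)
  qed
  also have "\<dots> = (\<integral>\<^sup>+x. (\<integral>\<^sup>+k. h (kcons k x n) \<partial>lborel) \<partial>M n)"
    by (rule nn_integral_cong) (simp add: kcons_eq)
  finally show ?thesis .
qed

lemma meas_kcons[measurable]:
  "(\<lambda>p. kcons (snd p) (fst p) n) \<in> measurable (M n \<Otimes>\<^sub>M lborel) (M (Suc n))"
proof -
  have "(\<lambda>p. \<lambda>i\<in>{..<Suc n}. (if i = 0 then snd p else fst p (i - 1))) \<in> measurable (M n \<Otimes>\<^sub>M lborel) (M (Suc n))"
    unfolding cfg_measure_def
  proof (rule measurable_restrict)
    fix i assume i: "i \<in> {..<Suc n}"
    show "(\<lambda>p. if i = 0 then snd p else fst p (i - 1)) \<in> measurable (Pi\<^sub>M {..<n} (\<lambda>_. lborel) \<Otimes>\<^sub>M lborel) (lborel :: (real^3) measure)"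
    proof (cases "i = 0")
      case True
      then show ?thesis using measurable_snd[of "Pi\<^sub>M {..<n} (\<lambda>_. (lborel :: (real^3) measure))" "lborel :: (real^3) measure"]
        by simp
    next
      case False
      then have "i - 1 \<in> {..<n}" using i by auto
      then have "(\<lambda>x. x (i - 1)) \<in> measurable (Pi\<^sub>M {..<n} (\<lambda>_. lborel)) (lborel :: (real^3) measure)"
        by (rule measurable_component_singleton)
      then have m: "(\<lambda>p. fst p (i - 1)) \<in> measurable (Pi\<^sub>M {..<n} (\<lambda>_. lborel) \<Otimes>\<^sub>M (lborel :: (real^3) measure)) (lborel :: (real^3) measure)"
        by (rule measurable_compose[OF measurable_fst])
      then show ?thesis using False by simp
    qed
  qed
  then show ?thesis by (simp add: kcons_def)
qed

lemma meas_kcons':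
  assumes "h \<in> borel_measurable (M (Suc n))"
  shows "(\<lambda>p. h (kcons (snd p) (fst p) n)) \<in> borel_measurable (M n \<Otimes>\<^sub>M lborel)"
  using measurable_comp[OF meas_kcons assms] by (simp add: comp_def)

lemma meas_kcons_int:
  assumes "h \<in> borel_measurable (M (Suc n))"
  shows "(\<lambda>x. \<integral>\<^sup>+k. h (kcons k x n) \<partial>lborel) \<in> borel_measurable (M n)"
proof -
  show ?thesis using sigma_finite_measure.borel_measurable_nn_integral_fst[OF sigma_finite_lborel meas_kcons'[OF assms]] by simp
qed


lemma nn_prod_basis:
  fixes w :: "real \<Rightarrow> ennreal"
  assumes [measurable]: "w \<in> borel_measurable borel"
  shows "(\<integral>\<^sup>+k. (\<Prod>b\<in>Basis. w (k \<bullet> b)) \<partial>(lborel :: (real^3) measure)) = (\<integral>\<^sup>+t. w t \<partial>lborel) ^ 3"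
proof -
  interpret product_sigma_finite "\<lambda>_::(real^3). (lborel :: real measure)"
    by (simp add: product_sigma_finite_def sigma_finite_lborel)
  have "(\<integral>\<^sup>+k. (\<Prod>b\<in>Basis. w (k \<bullet> b)) \<partial>(lborel :: (real^3) measure))
      = (\<integral>\<^sup>+f. (\<Prod>b\<in>Basis. w ((\<Sum>b'\<in>Basis. f b' *\<^sub>R b') \<bullet> b)) \<partial>(\<Pi>\<^sub>M b\<in>(Basis::(real^3) set). lborel))"
    by (subst lborel_eq) (simp add: nn_integral_distr)
  also have "\<dots> = (\<integral>\<^sup>+f. (\<Prod>b\<in>Basis. w (f b)) \<partial>(\<Pi>\<^sub>M b\<in>(Basis::(real^3) set). lborel))"
  proof (rule nn_integral_cong)
    fix f :: "real^3 \<Rightarrow> real"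
    have "\<And>b. b \<in> (Basis :: (real^3) set) \<Longrightarrow> (\<Sum>b'\<in>Basis. f b' *\<^sub>R b') \<bullet> b = f b"
      by (simp add: inner_sum_left inner_Basis if_distrib cong: if_cong)
    then show "(\<Prod>b\<in>Basis. w ((\<Sum>b'\<in>Basis. f b' *\<^sub>R b') \<bullet> b)) = (\<Prod>b\<in>Basis. w (f b))"
      by (intro prod.cong) auto
  qed
  also have "\<dots> = (\<Prod>b\<in>(Basis::(real^3) set). (\<integral>\<^sup>+t. w t \<partial>lborel))"
    by (rule product_nn_integral_prod) auto
  also have "\<dots> = (\<integral>\<^sup>+t. w t \<partial>lborel) ^ 3"
    by simp
  finally show ?thesis .
qed

lemma nn_even:
  fixes f :: "real \<Rightarrow> ennreal"
  assumes [measurable]: "f \<in> borel_measurable borel" and ev: "\<And>t. f (-t) = f t"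
  shows "(\<integral>\<^sup>+t. f t \<partial>lborel) \<le> 2 * (\<integral>\<^sup>+t. f t * indicator {0..} t \<partial>lborel)"
proof -
  have "(\<integral>\<^sup>+t. f t \<partial>lborel) = (\<integral>\<^sup>+t. f t * indicator {0..} t + f t * indicator {..<0} t \<partial>lborel)"
    by (intro nn_integral_cong) (auto simp: indicator_def)
  also have "\<dots> = (\<integral>\<^sup>+t. f t * indicator {0..} t \<partial>lborel) + (\<integral>\<^sup>+t. f t * indicator {..<0} t \<partial>lborel)"
    by (intro nn_integral_add) auto
  also have "(\<integral>\<^sup>+t. f t * indicator {..<0} t \<partial>lborel) = (\<integral>\<^sup>+t. f (0 + (-1) * t) * indicator {..<0} (0 + (-1) * t) \<partial>lborel)"
    using nn_integral_real_affine[of "\<lambda>t. f t * indicator {..<0} t" "-1" 0] by simp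
  also have "\<dots> \<le> (\<integral>\<^sup>+t. f t * indicator {0..} t \<partial>lborel)"
    by (intro nn_integral_mono) (auto simp: ev indicator_def)
  finally show ?thesis by (simp add: mult_2 add_mono)
qed

lemma int_w1: "(\<integral>\<^sup>+t. ennreal ((1 + \<bar>t\<bar>) powr (-7/6)) \<partial>lborel) < \<infinity>"
proof -
  have "(\<integral>\<^sup>+t. ennreal ((1 + \<bar>t\<bar>) powr (-7/6)) \<partial>lborel)
      \<le> 2 * (\<integral>\<^sup>+t. ennreal ((1 + \<bar>t\<bar>) powr (-7/6)) * indicator {0..} t \<partial>lborel)"
    by (rule nn_even) auto
  also have "(\<integral>\<^sup>+t. ennreal ((1 + \<bar>t\<bar>) powr (-7/6)) * indicator {0..} t \<partial>lborel)
      \<le> (\<integral>\<^sup>+t. indicator {0..1} t + ennreal (t powr (-7/6)) * indicator {1..} t \<partial>lborel)"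
  proof (intro nn_integral_mono)
    fix t :: real
    show "ennreal ((1 + \<bar>t\<bar>) powr (-7/6)) * indicator {0..} t \<le> indicator {0..1} t + ennreal (t powr (-7/6)) * indicator {1..} t"
    proof (cases "t \<ge> 0")
      case True
      then show ?thesis
      proof (cases "t \<le> 1")
        case True
        have "(1 + \<bar>t\<bar>) powr (-7/6) \<le> 1 powr (-7/6)" using \<open>t \<ge> 0\<close> by (intro powr_mono2') auto
        then have "ennreal ((1 + \<bar>t\<bar>) powr (-7/6)) \<le> 1" by (simp add: ennreal_le_1)
        also have "1 \<le> indicator {0..1} t + ennreal (t powr (-7/6)) * indicator {1..} t"
          using \<open>t\<ge>0\<close> True by (simp add: indicator_def)
        finally show ?thesis using \<open>t\<ge>0\<close> by (simp add: indicator_def)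
      next
        case False
        have "(1 + \<bar>t\<bar>) powr (-7/6) \<le> t powr (-7/6)" using False by (intro powr_mono2') auto
        then show ?thesis using False by (auto simp: indicator_def)
      qed
    qed (simp add: indicator_def)
  qed
  also have "\<dots> = emeasure lborel {0..1::real} + (\<integral>\<^sup>+t. ennreal (t powr (-7/6)) * indicator {1..} t \<partial>lborel)"
    by (subst nn_integral_add) auto
  also have "(\<integral>\<^sup>+t. ennreal (t powr (-7/6)) * indicator {1..} t \<partial>lborel) = ennreal (-(1 powr (-7/6+1)) / (-7/6+1))"
    by (rule nn_integral_has_integral_lebesgue') (use has_integral_powr_to_inf[of "-7/6" 1] in auto)
  finally show ?thesis by (rule le_less_trans) (auto simp: ennreal_mult_less_top mult_left_mono)
qed

lemma int_w2: "(\<integral>\<^sup>+t. ennreal (indicator {-2..2} t * \<bar>t\<bar> powr (-2/3)) \<partial>lborel) < \<infinity>"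
proof -
  have "(\<integral>\<^sup>+t. ennreal (indicator {-2..2} t * \<bar>t\<bar> powr (-2/3)) \<partial>lborel)
      \<le> 2 * (\<integral>\<^sup>+t. ennreal (indicator {-2..2} t * \<bar>t\<bar> powr (-2/3)) * indicator {0..} t \<partial>lborel)"
    by (rule nn_even) (auto simp: indicator_def)
  also have "(\<integral>\<^sup>+t. ennreal (indicator {-2..2} t * \<bar>t\<bar> powr (-2/3)) * indicator {0..} t \<partial>lborel)
      = (\<integral>\<^sup>+t. ennreal (t powr (-2/3)) * indicator {0..2} t \<partial>lborel)"
    by (intro nn_integral_cong) (auto simp: indicator_def)
  also have "\<dots> = ennreal (2 powr (-2/3+1) / (-2/3+1))"
    by (rule nn_integral_has_integral_lebesgue') (use has_integral_powr_from_0[of "-2/3" 2] in auto)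
  finally show ?thesis by (rule le_less_trans) (auto simp: ennreal_mult_less_top)
qed


lemma card_Basis3: "card (Basis :: (real^3) set) = 3"
  by simp

lemma prod_const_Basis: "(\<Prod>b\<in>(Basis :: (real^3) set). (c::real)) = c ^ 3"
  by simp

lemma R1: "(\<integral>\<^sup>+k. ennreal (indicator {k. 1 \<le> norm k} k * norm k powr (-7/2)) \<partial>(lborel :: (real^3) measure)) < \<infinity>"
proof -
  let ?w = "\<lambda>t::real. ennreal ((1 + \<bar>t\<bar>) powr (-7/6))"
  have pw: "ennreal (indicator {k. 1 \<le> norm k} k * norm k powr (-7/2)) \<le> ennreal (2 powr (7/2)) * (\<Prod>b\<in>Basis. ?w (k \<bullet> b))"
    for k :: "real^3"
  proof (cases "1 \<le> norm k")
    case True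
    have "(1 + norm k) powr (-7/6) \<le> (1 + \<bar>k \<bullet> b\<bar>) powr (-7/6)" if "b \<in> Basis" for b
      using Basis_le_norm[OF that, of k] norm_ge_zero[of k] by (intro powr_mono2') auto
    then have "(\<Prod>b\<in>(Basis::(real^3) set). (1 + norm k) powr (-7/6)) \<le> (\<Prod>b\<in>Basis. (1 + \<bar>k \<bullet> b\<bar>) powr (-7/6))"
      by (intro prod_mono) auto
    moreover have "(\<Prod>b\<in>(Basis::(real^3) set). (1 + norm k) powr (-7/6)) = (1 + norm k) powr (-7/2)"
    proof -
      have "(\<Prod>b\<in>(Basis::(real^3) set). (1 + norm k) powr (-7/6)) = ((1 + norm k) powr (-7/6)) ^ 3"
        by simp
      also have "\<dots> = (1 + norm k) powr (-7/6 * 3)"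
      proof -
        have pos: "0 < 1 + norm k" by (simp add: add_pos_nonneg)
        have "((1 + norm k) powr (-7/6)) ^ 3 = ((1 + norm k) powr (-7/6)) powr (real 3)"
          using pos by (simp add: powr_realpow)
        then show ?thesis by (simp add: powr_powr)
      qed
      finally show ?thesis by simp
    qed
    moreover have "norm k powr (-7/2) \<le> 2 powr (7/2) * (1 + norm k) powr (-7/2)"
    proof -
      have "(2 * norm k) powr (-7/2) \<le> (1 + norm k) powr (-7/2)"
        using True by (intro powr_mono2') auto
      then have "2 powr (-7/2) * norm k powr (-7/2) \<le> (1 + norm k) powr (-7/2)"
        using True by (simp add: powr_mult)
      have h: "2 powr (7/2) * 2 powr (-7/2) = (1::real)" by (simp add: powr_add[symmetric])
      have "norm k powr (-7/2) = 2 powr (7/2) * (2 powr (-7/2) * norm k powr (-7/2))"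
        by (simp only: mult.assoc[symmetric] h mult_1)
      also have "\<dots> \<le> 2 powr (7/2) * (1 + norm k) powr (-7/2)"
        by (rule mult_left_mono[OF \<open>2 powr (-7/2) * norm k powr (-7/2) \<le> (1 + norm k) powr (-7/2)\<close>]) simp
      finally show ?thesis .
    qed
    ultimately have "norm k powr (-7/2) \<le> 2 powr (7/2) * (\<Prod>b\<in>Basis. (1 + \<bar>k \<bullet> b\<bar>) powr (-7/6))"
    proof -
      assume a1: "(\<Prod>b\<in>(Basis::(real^3) set). (1 + norm k) powr (-7/6)) \<le> (\<Prod>b\<in>Basis. (1 + \<bar>k \<bullet> b\<bar>) powr (-7/6))"
        and a2: "(\<Prod>b\<in>(Basis::(real^3) set). (1 + norm k) powr (-7/6)) = (1 + norm k) powr (-7/2)"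
        and a3: "norm k powr (-7/2) \<le> 2 powr (7/2) * (1 + norm k) powr (-7/2)"
      have "2 powr (7/2) * (1 + norm k) powr (-7/2) \<le> 2 powr (7/2) * (\<Prod>b\<in>(Basis::(real^3) set). (1 + \<bar>k \<bullet> b\<bar>) powr (-7/6))"
        using a1 a2 by (intro mult_left_mono) auto
      then show ?thesis using a3 by linarith
    qed
    then show ?thesis using True
      by (simp add: prod_ennreal ennreal_mult'[symmetric] ennreal_leI)
  qed simp
  have "(\<integral>\<^sup>+k. ennreal (indicator {k. 1 \<le> norm k} k * norm k powr (-7/2)) \<partial>(lborel :: (real^3) measure))
      \<le> (\<integral>\<^sup>+k. ennreal (2 powr (7/2)) * (\<Prod>b\<in>Basis. ?w (k \<bullet> b)) \<partial>(lborel :: (real^3) measure))"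
    by (intro nn_integral_mono pw)
  also have "\<dots> = ennreal (2 powr (7/2)) * (\<integral>\<^sup>+k. (\<Prod>b\<in>Basis. ?w (k \<bullet> b)) \<partial>(lborel :: (real^3) measure))"
    by (rule nn_integral_cmult) measurable
  also have "\<dots> = ennreal (2 powr (7/2)) * (\<integral>\<^sup>+t. ?w t \<partial>lborel) ^ 3"
    by (subst nn_prod_basis) auto
  also have "\<dots> < \<infinity>"
    using int_w1 by (simp add: ennreal_mult_less_top power_less_top_ennreal)
  finally show ?thesis .
qed

lemma R2: "(\<integral>\<^sup>+k. ennreal (indicator {k. 0 < norm k \<and> norm k < 2} k * norm k powr (-2)) \<partial>(lborel :: (real^3) measure)) < \<infinity>"
proof -
  let ?w = "\<lambda>t::real. if t = 0 then top else ennreal (indicator {-2..2} t * \<bar>t\<bar> powr (-2/3))"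
  have pw: "ennreal (indicator {k. 0 < norm k \<and> norm k < 2} k * norm k powr (-2)) \<le> (\<Prod>b\<in>Basis. ?w (k \<bullet> b))"
    for k :: "real^3"
  proof (cases "0 < norm k \<and> norm k < 2")
    case True
    show ?thesis
    proof (cases "\<exists>b\<in>(Basis::(real^3) set). k \<bullet> b = 0")
      case True
      then obtain b0 where b0: "b0 \<in> (Basis::(real^3) set)" "k \<bullet> b0 = 0" by blast
      have "\<forall>b\<in>(Basis::(real^3) set). ?w (k \<bullet> b) \<noteq> 0"
      proof
        fix b :: "real^3" assume b: "b \<in> Basis"
        have "\<bar>k \<bullet> b\<bar> \<le> 2" using Basis_le_norm[OF b, of k] \<open>0 < norm k \<and> norm k < 2\<close> by simp
        then show "?w (k \<bullet> b) \<noteq> 0" by (auto simp: indicator_def)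
      qed
      moreover have "?w (k \<bullet> b0) = top" using b0 by simp
      ultimately have "(\<Prod>b\<in>(Basis::(real^3) set). ?w (k \<bullet> b)) = top"
        using b0 by (subst ennreal_prod_eq_top) auto
      then show ?thesis by simp
    next
      case False
      have le2: "\<bar>k \<bullet> b\<bar> \<le> 2" if "b \<in> Basis" for b
        using Basis_le_norm[OF that, of k] \<open>0 < norm k \<and> norm k < 2\<close> by simp
      have in2: "-2 \<le> k \<bullet> b \<and> k \<bullet> b \<le> 2" if "b \<in> Basis" for b
        using le2[OF that] by (simp add: abs_le_iff)
      have eq: "(\<Prod>b\<in>(Basis::(real^3) set). ?w (k \<bullet> b)) = ennreal (\<Prod>b\<in>Basis. \<bar>k \<bullet> b\<bar> powr (-2/3))"
        using False in2 by (subst prod_ennreal[symmetric]) (auto intro!: prod.cong simp: indicator_def abs_le_iff)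
      have "norm k powr (-2/3) \<le> \<bar>k \<bullet> b\<bar> powr (-2/3)" if "b \<in> Basis" for b
        using Basis_le_norm[OF that, of k] False that by (intro powr_mono2') auto
      then have "(\<Prod>b\<in>(Basis::(real^3) set). norm k powr (-2/3)) \<le> (\<Prod>b\<in>Basis. \<bar>k \<bullet> b\<bar> powr (-2/3))"
        by (intro prod_mono) auto
      moreover have "(\<Prod>b\<in>(Basis::(real^3) set). norm k powr (-2/3)) = norm k powr (-2)"
      proof -
        have "(\<Prod>b\<in>(Basis::(real^3) set). norm k powr (-2/3)) = (norm k powr (-2/3)) ^ 3"
          by simp
        also have "\<dots> = norm k powr (-2/3 * 3)"
        proof -
        have pos: "0 < norm k" using True by simp
        have "(norm k powr (-2/3)) ^ 3 = (norm k powr (-2/3)) powr (real 3)"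
          using pos by (simp add: powr_realpow)
        then show ?thesis by (simp add: powr_powr)
      qed
        finally show ?thesis by simp
      qed
      ultimately show ?thesis using True eq by (simp add: indicator_def ennreal_leI)
    qed
  qed simp
  have "(\<integral>\<^sup>+k. ennreal (indicator {k. 0 < norm k \<and> norm k < 2} k * norm k powr (-2)) \<partial>(lborel :: (real^3) measure))
      \<le> (\<integral>\<^sup>+k. (\<Prod>b\<in>Basis. ?w (k \<bullet> b)) \<partial>(lborel :: (real^3) measure))"
    by (intro nn_integral_mono pw)
  also have "\<dots> = (\<integral>\<^sup>+t. ?w t \<partial>lborel) ^ 3"
    by (subst nn_prod_basis) auto
  also have "(\<integral>\<^sup>+t. ?w t \<partial>lborel) = (\<integral>\<^sup>+t. ennreal (indicator {-2..2} t * \<bar>t\<bar> powr (-2/3)) \<partial>lborel)"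
    by (rule nn_integral_cong_AE) (use AE_lborel_singleton[of 0] in \<open>auto elim!: eventually_mono\<close>)
  also have "\<dots> ^ 3 < \<infinity>"
    using int_w2 by (simp add: power_less_top_ennreal)
  finally show ?thesis .
qed


definition symf :: "nat \<Rightarrow> (config \<Rightarrow> 'a) \<Rightarrow> bool" where
  "symf N \<Phi> \<longleftrightarrow> (\<forall>p x. p permutes {..<N} \<longrightarrow> x \<in> space (M N) \<longrightarrow> \<Phi> (x \<circ> p) = \<Phi> x)"

definition Hf :: "nat \<Rightarrow> config \<Rightarrow> real" where
  "Hf N y = (\<Sum>i<N. norm (y i))"

definition Mh :: "nat \<Rightarrow> config \<Rightarrow> real" where
  "Mh N y = (\<Sum>i<N. if 1 \<le> norm (y i) then 1 else 0)"

lemma Mh_le_Hf: "Mh N y \<le> Hf N y"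
  unfolding Mh_def Hf_def by (intro sum_mono) auto

lemma Hf_nonneg: "0 \<le> Hf N y"
  unfolding Hf_def by (intro sum_nonneg) auto

lemma Mh_nonneg: "0 \<le> Mh N y"
  unfolding Mh_def by (intro sum_nonneg) auto

lemma kcons_0[simp]: "kcons k x n 0 = k"
  by (simp add: kcons_def)

lemma kcons_Suc[simp]: "i < n \<Longrightarrow> kcons k x n (Suc i) = x i"
  by (simp add: kcons_def)

lemma Hf_kcons: "Hf (Suc n) (kcons k x n) = norm k + Hf n x"
proof -
  have "Hf (Suc n) (kcons k x n) = norm (kcons k x n 0) + (\<Sum>i<n. norm (kcons k x n (Suc i)))"
    by (simp only: Hf_def sum.lessThan_Suc_shift)
  then show ?thesis by (simp add: Hf_def)
qed

lemma Mh_kcons: "Mh (Suc n) (kcons k x n) = (if 1 \<le> norm k then 1 else 0) + Mh n x"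
proof -
  have "Mh (Suc n) (kcons k x n) = (if 1 \<le> norm (kcons k x n 0) then 1 else 0) + (\<Sum>i<n. if 1 \<le> norm (kcons k x n (Suc i)) then 1 else 0)"
    by (simp only: Mh_def sum.lessThan_Suc_shift)
  then show ?thesis by (simp add: Mh_def)
qed

lemma Hf_perm: "p permutes {..<N} \<Longrightarrow> Hf N (y \<circ> p) = Hf N y"
  unfolding Hf_def using sum.permute[of p "{..<N}" "\<lambda>i. norm (y i)"] by (simp add: comp_def)

lemma Mh_perm: "p permutes {..<N} \<Longrightarrow> Mh N (y \<circ> p) = Mh N y"
  unfolding Mh_def using sum.permute[of p "{..<N}" "\<lambda>i. if 1 \<le> norm (y i) then 1 else (0::real)"]
  by (simp add: comp_def)

lemma meas_comp_y[measurable]: "i < N \<Longrightarrow> (\<lambda>y. y i) \<in> measurable (M N) (lborel :: (real^3) measure)"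
  unfolding cfg_measure_def by (rule measurable_component_singleton) simp

lemma meas_norm_y: assumes i: "i < N" shows "(\<lambda>y. norm (y i)) \<in> borel_measurable (M N)"
proof -
  have "(\<lambda>y. y i) \<in> borel_measurable (M N)" using meas_comp_y[OF i] by simp
  from measurable_compose[OF this borel_measurable_norm] show ?thesis by simp
qed

lemma meas_Hf[measurable]: "Hf N \<in> borel_measurable (M N)"
proof -
  have "(\<lambda>y. \<Sum>i<N. norm (y i)) \<in> borel_measurable (M N)"
    by (intro borel_measurable_sum) (auto intro!: meas_norm_y)
  then show ?thesis by (simp add: Hf_def[abs_def])
qed

lemma meas_Mh[measurable]: "Mh N \<in> borel_measurable (M N)"
proof -
  have "\<And>i. i < N \<Longrightarrow> (\<lambda>y. if 1 \<le> norm (y i) then 1 else (0::real)) \<in> borel_measurable (M N)"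
  proof -
    fix i assume i: "i < N"
    have [measurable]: "(\<lambda>y. norm (y i)) \<in> borel_measurable (M N)" using meas_norm_y[OF i] .
    show "(\<lambda>y. if 1 \<le> norm (y i) then 1 else (0::real)) \<in> borel_measurable (M N)"
      by measurable
  qed
  then have "(\<lambda>y. \<Sum>i<N. if 1 \<le> norm (y i) then 1 else (0::real)) \<in> borel_measurable (M N)"
    by (intro borel_measurable_sum) auto
  then show ?thesis by (simp add: Mh_def[abs_def])
qed

lemma perm_int:
  fixes \<Phi> g :: "config \<Rightarrow> ennreal"
  assumes s: "symf N \<Phi>" and [measurable]: "\<Phi> \<in> borel_measurable (M N)" "g \<in> borel_measurable (M N)"
    and p: "p permutes {..<N}"
  shows "(\<integral>\<^sup>+y. \<Phi> y * g (y \<circ> p) \<partial>M N) = (\<integral>\<^sup>+y. \<Phi> y * g y \<partial>M N)"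
proof -
  have "(\<integral>\<^sup>+y. \<Phi> y * g (y \<circ> p) \<partial>M N) = (\<integral>\<^sup>+y. \<Phi> (y \<circ> p) * g (y \<circ> p) \<partial>M N)"
    using s p by (intro nn_integral_cong) (simp add: symf_def)
  also have "\<dots> = (\<integral>\<^sup>+y. \<Phi> y * g y \<partial>M N)"
    by (rule nn_perm[OF p, of "\<lambda>y. \<Phi> y * g y"]) simp
  finally show ?thesis .
qed

lemma idx_int:
  fixes \<Phi> :: "config \<Rightarrow> ennreal"
  assumes s: "symf N \<Phi>" and [measurable]: "\<Phi> \<in> borel_measurable (M N)" and i: "i < N"
  shows "(\<integral>\<^sup>+y. \<Phi> y * ennreal (norm (y i)) \<partial>M N) = (\<integral>\<^sup>+y. \<Phi> y * ennreal (norm (y 0)) \<partial>M N)"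
proof -
  have p: "Transposition.transpose 0 i permutes {..<N}" using i by (intro permutes_swap_id) auto
  have [measurable]: "(\<lambda>y. norm (y 0)) \<in> borel_measurable (M N)" using i by (intro meas_norm_y) simp
  have m: "(\<lambda>y. ennreal (norm (y 0))) \<in> borel_measurable (M N)"
    by measurable
  show ?thesis
    using perm_int[OF s assms(2) m p] by (simp add: comp_def)
qed

lemma Hsum_int:
  fixes \<Phi> :: "config \<Rightarrow> ennreal"
  assumes s: "symf N \<Phi>" and [measurable]: "\<Phi> \<in> borel_measurable (M N)"
  shows "(\<integral>\<^sup>+y. \<Phi> y * ennreal (Hf N y) \<partial>M N) = of_nat N * (\<integral>\<^sup>+y. \<Phi> y * ennreal (norm (y 0)) \<partial>M N)"
proof -
  have "(\<integral>\<^sup>+y. \<Phi> y * ennreal (Hf N y) \<partial>M N) = (\<integral>\<^sup>+y. (\<Sum>i<N. \<Phi> y * ennreal (norm (y i))) \<partial>M N)"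
    unfolding Hf_def by (intro nn_integral_cong, subst sum_ennreal[symmetric]) (simp_all add: sum_distrib_left del: sum_ennreal)
  also have "\<dots> = (\<Sum>i<N. (\<integral>\<^sup>+y. \<Phi> y * ennreal (norm (y i)) \<partial>M N))"
  proof (rule nn_integral_sum)
    fix i assume "i \<in> {..<N}"
    then have [measurable]: "(\<lambda>y. norm (y i)) \<in> borel_measurable (M N)" by (intro meas_norm_y) simp
    show "(\<lambda>y. \<Phi> y * ennreal (norm (y i))) \<in> borel_measurable (M N)" by measurable
  qed
  also have "\<dots> = (\<Sum>i<N. (\<integral>\<^sup>+y. \<Phi> y * ennreal (norm (y 0)) \<partial>M N))"
    by (intro sum.cong refl idx_int[OF s]) auto
  also have "\<dots> = of_nat N * (\<integral>\<^sup>+y. \<Phi> y * ennreal (norm (y 0)) \<partial>M N)"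
    by simp
  finally show ?thesis .
qed


lemma meas_kcons_k: "(\<lambda>k. kcons k x n) \<in> measurable (lborel :: (real^3) measure) (M (Suc n))"
proof -
  have "(\<lambda>k. \<lambda>i\<in>{..<Suc n}. (if i = 0 then k else x (i - 1))) \<in> measurable (lborel :: (real^3) measure) (M (Suc n))"
    unfolding cfg_measure_def
  proof (rule measurable_restrict)
    fix i assume i: "i \<in> {..<Suc n}"
    show "(\<lambda>k. if i = 0 then k else x (i - 1)) \<in> measurable (lborel :: (real^3) measure) (lborel :: (real^3) measure)"
      by (cases "i = 0") auto
  qed
  then show ?thesis by (simp add: kcons_def)
qed

lemma meas_kcons_k'[measurable]: "h \<in> borel_measurable (M (Suc n)) \<Longrightarrow> (\<lambda>k. h (kcons k x n)) \<in> borel_measurable lborel"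
  using measurable_comp[OF meas_kcons_k] by (simp add: comp_def)

lemma aop_bound:
  fixes F :: "real^3 \<Rightarrow> real" and \<phi> :: "config \<Rightarrow> real"
  assumes [measurable]: "F \<in> borel_measurable borel" and Fp: "\<And>k. 0 \<le> F k" and F0: "F 0 = 0"
    and [measurable]: "\<phi> \<in> borel_measurable (M (Suc n))" and \<phi>p: "\<And>y. 0 \<le> \<phi> y"
  shows "(\<integral>\<^sup>+x. (\<integral>\<^sup>+k. ennreal (F k * \<phi> (kcons k x n)) \<partial>lborel)^2 \<partial>M n)
     \<le> (\<integral>\<^sup>+k. ennreal (F k^2 / norm k) \<partial>lborel) * (\<integral>\<^sup>+y. ennreal (norm (y 0) * \<phi> y^2) \<partial>M (Suc n))"
proof -
  define CF where "CF = (\<integral>\<^sup>+k. ennreal (F k^2 / norm k) \<partial>(lborel :: (real^3) measure))"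
  define h where "h = (\<lambda>y::config. ennreal (norm (y 0) * \<phi> y^2))"
  have [measurable]: "h \<in> borel_measurable (M (Suc n))"
  proof -
    have [measurable]: "(\<lambda>y. norm (y 0)) \<in> borel_measurable (M (Suc n))" by (intro meas_norm_y) simp
    show ?thesis unfolding h_def by measurable
  qed
  have pw: "(\<integral>\<^sup>+k. ennreal (F k * \<phi> (kcons k x n)) \<partial>lborel)^2 \<le> CF * (\<integral>\<^sup>+k. h (kcons k x n) \<partial>lborel)" for x
  proof -
    let ?f = "\<lambda>k::real^3. ennreal (F k / sqrt (norm k))"
    let ?g = "\<lambda>k. ennreal (sqrt (norm k) * \<phi> (kcons k x n))"
    have e1: "ennreal (F k * \<phi> (kcons k x n)) = ?f k * ?g k" for k
    proof (cases "k = 0")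
      case True then show ?thesis using F0 by simp
    next
      case False
      then have "F k * \<phi> (kcons k x n) = (F k / sqrt (norm k)) * (sqrt (norm k) * \<phi> (kcons k x n))"
        by simp
      then show ?thesis using Fp \<phi>p by (simp add: ennreal_mult'[symmetric])
    qed
    have e2: "?f k ^ 2 = ennreal (F k^2 / norm k)" for k
      using Fp by (simp add: ennreal_power power_divide)
    have e3: "?g k ^ 2 = h (kcons k x n)" for k
      using \<phi>p by (simp add: ennreal_power power_mult_distrib h_def)
    have "(\<integral>\<^sup>+k. ennreal (F k * \<phi> (kcons k x n)) \<partial>lborel)^2 = (\<integral>\<^sup>+k. ?f k * ?g k \<partial>lborel)^2"
      by (simp add: e1)
    also have "\<dots> \<le> (\<integral>\<^sup>+k. ?f k ^ 2 \<partial>lborel) * (\<integral>\<^sup>+k. ?g k ^ 2 \<partial>lborel)"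
      by (rule Cauchy_Schwarz_nn_integral) measurable
    also have "\<dots> = CF * (\<integral>\<^sup>+k. h (kcons k x n) \<partial>lborel)"
      by (simp add: e2 e3 CF_def)
    finally show ?thesis .
  qed
  have "(\<integral>\<^sup>+x. (\<integral>\<^sup>+k. ennreal (F k * \<phi> (kcons k x n)) \<partial>lborel)^2 \<partial>M n) \<le> (\<integral>\<^sup>+x. CF * (\<integral>\<^sup>+k. h (kcons k x n) \<partial>lborel) \<partial>M n)"
    by (intro nn_integral_mono pw)
  also have "\<dots> = CF * (\<integral>\<^sup>+x. (\<integral>\<^sup>+k. h (kcons k x n) \<partial>lborel) \<partial>M n)"
    by (rule nn_integral_cmult, rule meas_kcons_int) measurable
  also have "\<dots> = CF * (\<integral>\<^sup>+y. h y \<partial>M (Suc n))"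
    by (simp add: nn_kcons)
  finally show ?thesis by (simp add: CF_def h_def)
qed

lemma nn_kcons2:
  assumes [measurable]: "h \<in> borel_measurable (M (Suc (Suc n)))"
  shows "(\<integral>\<^sup>+y. h y \<partial>M (Suc (Suc n))) = (\<integral>\<^sup>+x. (\<integral>\<^sup>+k. (\<integral>\<^sup>+k'. h (kcons k' (kcons k x n) (Suc n)) \<partial>lborel) \<partial>lborel) \<partial>M n)"
proof -
  have [measurable]: "(\<lambda>z. \<integral>\<^sup>+k'. h (kcons k' z (Suc n)) \<partial>lborel) \<in> borel_measurable (M (Suc n))"
    by (rule meas_kcons_int) simp
  show ?thesis
    by (simp add: nn_kcons[of h] nn_kcons[of "\<lambda>z. \<integral>\<^sup>+k'. h (kcons k' z (Suc n)) \<partial>lborel"])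
qed

definition Vj :: "nat \<Rightarrow> nat \<Rightarrow> config \<Rightarrow> real" where
  "Vj N j y = (if 1 \<le> norm (y 0) \<and> 1 \<le> norm (y j) then norm (y 0) / Mh N y else 0)"

definition Wp :: "nat \<Rightarrow> config \<Rightarrow> real" where
  "Wp N y = (if 1 \<le> norm (y 0) \<and> 1 \<le> norm (y 1) then (norm (y 0) + norm (y 1)) / Mh N y else 0)"

lemma Vj_nonneg: "0 \<le> Vj N j y"
  unfolding Vj_def using Mh_nonneg by auto

lemma meas_Vj[measurable]: "j < N \<Longrightarrow> Vj N j \<in> borel_measurable (M N)"
proof -
  assume j: "j < N"
  then have [measurable]: "(\<lambda>y. norm (y 0)) \<in> borel_measurable (M N)" "(\<lambda>y. norm (y j)) \<in> borel_measurable (M N)"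
    by (auto intro!: meas_norm_y)
  show ?thesis unfolding Vj_def[abs_def] by measurable
qed

lemma pair_bound:
  fixes \<Phi> :: "config \<Rightarrow> ennreal"
  assumes s: "symf N \<Phi>" and [measurable]: "\<Phi> \<in> borel_measurable (M N)" and N: "2 \<le> N"
  shows "of_nat N * of_nat (N - 1) * (\<integral>\<^sup>+y. \<Phi> y * ennreal (Wp N y) \<partial>M N) \<le> 2 * (\<integral>\<^sup>+y. \<Phi> y * ennreal (Hf N y) \<partial>M N)"
proof -
  have [measurable]: "(\<lambda>y. norm (y 0)) \<in> borel_measurable (M N)" "(\<lambda>y. norm (y 1)) \<in> borel_measurable (M N)"
    using N by (auto intro!: meas_norm_y)
  define V1' where "V1' y = (if 1 \<le> norm (y 0) \<and> 1 \<le> norm (y 1) then norm (y 1) / Mh N y else 0)" for y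
  have [measurable]: "V1' \<in> borel_measurable (M N)" unfolding V1'_def[abs_def] by measurable
  have [measurable]: "Vj N 1 \<in> borel_measurable (M N)" using N by (intro meas_Vj) simp
  have t01: "Transposition.transpose 0 1 permutes {..<N}" using N by (intro permutes_swap_id) auto
  have "(\<integral>\<^sup>+y. \<Phi> y * ennreal (Wp N y) \<partial>M N) = (\<integral>\<^sup>+y. \<Phi> y * ennreal (Vj N 1 y) + \<Phi> y * ennreal (V1' y) \<partial>M N)"
  proof (intro nn_integral_cong)
    fix y
    have "ennreal (Wp N y) = ennreal (Vj N 1 y) + ennreal (V1' y)"
    proof (cases "1 \<le> norm (y 0) \<and> 1 \<le> norm (y 1)")
      case True
      then have "Wp N y = norm (y 0) / Mh N y + norm (y 1) / Mh N y" by (simp add: Wp_def add_divide_distrib)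
      moreover have "0 \<le> norm (y 0) / Mh N y" "0 \<le> norm (y 1) / Mh N y" using Mh_nonneg[of N y] by auto
      ultimately show ?thesis using True by (simp add: Vj_def V1'_def ennreal_plus)
    next
      case False
      then show ?thesis by (auto simp: Wp_def Vj_def V1'_def)
    qed
    then show "\<Phi> y * ennreal (Wp N y) = \<Phi> y * ennreal (Vj N 1 y) + \<Phi> y * ennreal (V1' y)"
      by (simp add: distrib_left)
  qed
  also have "\<dots> = (\<integral>\<^sup>+y. \<Phi> y * ennreal (Vj N 1 y) \<partial>M N) + (\<integral>\<^sup>+y. \<Phi> y * ennreal (V1' y) \<partial>M N)"
    by (rule nn_integral_add) measurable
  also have "(\<integral>\<^sup>+y. \<Phi> y * ennreal (V1' y) \<partial>M N) = (\<integral>\<^sup>+y. \<Phi> y * ennreal (Vj N 1 y) \<partial>M N)"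
  proof -
    have "(\<integral>\<^sup>+y. \<Phi> y * ennreal (Vj N 1 (y \<circ> Transposition.transpose 0 1)) \<partial>M N) = (\<integral>\<^sup>+y. \<Phi> y * ennreal (Vj N 1 y) \<partial>M N)"
      by (rule perm_int[OF s _ _ t01]) measurable
    moreover have "Vj N 1 (y \<circ> Transposition.transpose 0 1) = V1' y" for y
      using Mh_perm[OF t01, of y] by (auto simp: Vj_def V1'_def)
    ultimately show ?thesis by simp
  qed
  finally have W2: "(\<integral>\<^sup>+y. \<Phi> y * ennreal (Wp N y) \<partial>M N) = 2 * (\<integral>\<^sup>+y. \<Phi> y * ennreal (Vj N 1 y) \<partial>M N)"
    by (simp add: mult_2)
  have Vsame: "(\<integral>\<^sup>+y. \<Phi> y * ennreal (Vj N j y) \<partial>M N) = (\<integral>\<^sup>+y. \<Phi> y * ennreal (Vj N 1 y) \<partial>M N)"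
    if j: "j \<in> {1..<N}" for j
  proof -
    have t: "Transposition.transpose 1 j permutes {..<N}" using N j by (intro permutes_swap_id) auto
    have "(\<integral>\<^sup>+y. \<Phi> y * ennreal (Vj N 1 (y \<circ> Transposition.transpose 1 j)) \<partial>M N) = (\<integral>\<^sup>+y. \<Phi> y * ennreal (Vj N 1 y) \<partial>M N)"
      by (rule perm_int[OF s _ _ t]) measurable
    moreover have "Vj N 1 (y \<circ> Transposition.transpose 1 j) = Vj N j y" for y
      using Mh_perm[OF t, of y] j by (auto simp: Vj_def)
    ultimately show ?thesis by simp
  qed
  have sumV: "(\<Sum>j\<in>{1..<N}. Vj N j y) \<le> norm (y 0)" for y
  proof (cases "1 \<le> norm (y 0)")
    case True
    have Meq: "Mh N y = 1 + (\<Sum>j\<in>{1..<N}. if 1 \<le> norm (y j) then 1 else 0)"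
    proof -
      have "{..<N} = insert 0 {1..<N}" using N by auto
      then show ?thesis using True by (simp add: Mh_def)
    qed
    have "(\<Sum>j\<in>{1..<N}. Vj N j y) = (\<Sum>j\<in>{1..<N}. norm (y 0) * (if 1 \<le> norm (y j) then 1 else 0) / Mh N y)"
      using True by (intro sum.cong) (auto simp: Vj_def)
    also have "\<dots> = norm (y 0) * (\<Sum>j\<in>{1..<N}. if 1 \<le> norm (y j) then 1 else 0) / Mh N y"
      by (simp only: sum_divide_distrib[symmetric] sum_distrib_left[symmetric])
    also have "\<dots> \<le> norm (y 0)"
    proof -
      have S: "0 \<le> (\<Sum>j\<in>{1..<N}. if 1 \<le> norm (y j) then 1 else (0::real))" by (intro sum_nonneg) auto
      have "norm (y 0) * (\<Sum>j\<in>{1..<N}. if 1 \<le> norm (y j) then 1 else 0) \<le> norm (y 0) * Mh N y"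
        using Meq S by (intro mult_left_mono) auto
      moreover have "0 < Mh N y" using Meq S by simp
      ultimately show ?thesis by (simp add: divide_le_eq)
    qed
    finally show ?thesis .
  next
    case False
    then show ?thesis by (simp add: Vj_def)
  qed
  have step1: "of_nat (N - 1) * (\<integral>\<^sup>+y. \<Phi> y * ennreal (Vj N 1 y) \<partial>M N) \<le> (\<integral>\<^sup>+y. \<Phi> y * ennreal (norm (y 0)) \<partial>M N)"
  proof -
    have "of_nat (N - 1) * (\<integral>\<^sup>+y. \<Phi> y * ennreal (Vj N 1 y) \<partial>M N) = (\<Sum>j\<in>{1..<N}. (\<integral>\<^sup>+y. \<Phi> y * ennreal (Vj N j y) \<partial>M N))"
    proof -
      have "(\<Sum>j\<in>{1..<N}. (\<integral>\<^sup>+y. \<Phi> y * ennreal (Vj N j y) \<partial>M N)) = (\<Sum>j\<in>{1..<N}. (\<integral>\<^sup>+y. \<Phi> y * ennreal (Vj N 1 y) \<partial>M N))"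
        by (rule sum.cong[OF refl Vsame])
      then show ?thesis by simp
    qed
    also have "\<dots> = (\<integral>\<^sup>+y. (\<Sum>j\<in>{1..<N}. \<Phi> y * ennreal (Vj N j y)) \<partial>M N)"
      by (rule nn_integral_sum[symmetric]) auto
    also have "\<dots> \<le> (\<integral>\<^sup>+y. \<Phi> y * ennreal (norm (y 0)) \<partial>M N)"
    proof (intro nn_integral_mono)
      fix y
      have "(\<Sum>j\<in>{1..<N}. \<Phi> y * ennreal (Vj N j y)) = \<Phi> y * ennreal (\<Sum>j\<in>{1..<N}. Vj N j y)"
        by (simp add: sum_distrib_left[symmetric] Vj_nonneg)
      also have "\<dots> \<le> \<Phi> y * ennreal (norm (y 0))"
        by (intro mult_left_mono ennreal_leI sumV) auto
      finally show "(\<Sum>j\<in>{1..<N}. \<Phi> y * ennreal (Vj N j y)) \<le> \<Phi> y * ennreal (norm (y 0))" .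
    qed
    finally show ?thesis .
  qed
  have "of_nat N * of_nat (N - 1) * (\<integral>\<^sup>+y. \<Phi> y * ennreal (Wp N y) \<partial>M N)
      = 2 * (of_nat N * (of_nat (N - 1) * (\<integral>\<^sup>+y. \<Phi> y * ennreal (Vj N 1 y) \<partial>M N)))"
    by (simp add: W2 mult_ac)
  also have "\<dots> \<le> 2 * (of_nat N * (\<integral>\<^sup>+y. \<Phi> y * ennreal (norm (y 0)) \<partial>M N))"
    by (intro mult_left_mono step1) auto
  also have "\<dots> = 2 * (\<integral>\<^sup>+y. \<Phi> y * ennreal (Hf N y) \<partial>M N)"
    by (simp add: Hsum_int[OF s])
  finally show ?thesis .
qed


lemma amgm:
  fixes P A B a b :: real
  assumes "0 \<le> A" "0 \<le> B" "0 \<le> a" "0 \<le> b" "0 \<le> P" "P^2 \<le> A * B"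
  shows "P * a * b \<le> (A * a^2 + B * b^2) / 2"
proof -
  have "P \<le> sqrt A * sqrt B" using assms by (metis real_le_rsqrt real_sqrt_mult)
  then have "P * a * b \<le> sqrt A * sqrt B * a * b"
    using assms by (intro mult_right_mono) auto
  moreover have "0 \<le> (sqrt A * a - sqrt B * b)^2" by simp
  then have "2 * (sqrt A * a) * (sqrt B * b) \<le> (sqrt A * a)^2 + (sqrt B * b)^2"
    by (simp add: power2_diff)
  then have "2 * (sqrt A * sqrt B * a * b) \<le> A * a^2 + B * b^2"
    using assms by (simp add: power_mult_distrib mult_ac)
  ultimately show ?thesis by simp
qed

lemma kcons2_01:
  "kcons k' (kcons k x n) (Suc n) 0 = k'" "kcons k' (kcons k x n) (Suc n) 1 = k"
  by (simp_all add: kcons_def)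

lemma Mh_kcons2: "Mh (Suc (Suc n)) (kcons k' (kcons k x n) (Suc n)) =
   (if 1 \<le> norm k' then 1 else 0) + ((if 1 \<le> norm k then 1 else 0) + Mh n x)"
  by (simp add: Mh_kcons)

lemma bb_pointwise:
  fixes F :: "real^3 \<Rightarrow> real" and a b :: real and x :: config and n :: nat and k k' :: "real^3"
  assumes Fp: "\<And>k. 0 \<le> F k" and hard: "\<And>k. F k \<noteq> 0 \<Longrightarrow> 1 \<le> norm k" and ab: "0 \<le> a" "0 \<le> b"
  defines "y \<equiv> kcons k' (kcons k x n) (Suc n)"
  shows "sqrt ((real n + 1) * (real n + 2)) * a * (F k * F k') * b
    \<le> (F k^2 * F k'^2 / (norm k + norm k') * (Mh n x + 2) * a^2 + (real n + 1) * (real n + 2) * Wp (Suc (Suc n)) y * b^2) / 2"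
proof (cases "F k = 0 \<or> F k' = 0")
  case True
  have "0 \<le> Wp (Suc (Suc n)) y" using Mh_nonneg by (auto simp: Wp_def)
  moreover have "0 \<le> Mh n x + 2" using Mh_nonneg[of n x] by simp
  ultimately have "0 \<le> F k^2 * F k'^2 / (norm k + norm k') * (Mh n x + 2) * a^2 + (real n + 1) * (real n + 2) * Wp (Suc (Suc n)) y * b^2"
    using Mh_nonneg[of n x] by (intro add_nonneg_nonneg mult_nonneg_nonneg) auto
  then show ?thesis using True by auto
next
  case False
  then have hk: "1 \<le> norm k" "1 \<le> norm k'" using hard by auto
  have Mpos: "0 < Mh n x + 2" using Mh_nonneg[of n x] by simp
  have W: "Wp (Suc (Suc n)) y = (norm k' + norm k) / (Mh n x + 2)"
    using hk by (simp add: Wp_def y_def kcons2_01 Mh_kcons2)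
  let ?A = "F k^2 * F k'^2 / (norm k + norm k') * (Mh n x + 2)"
  let ?B = "(real n + 1) * (real n + 2) * Wp (Suc (Suc n)) y"
  have AB: "?A * ?B = (real n + 1) * (real n + 2) * (F k * F k')^2"
  proof -
    have nz: "norm k + norm k' \<noteq> 0" "Mh n x + 2 \<noteq> 0" using hk Mpos by auto
    have "?A * ?B = (real n + 1) * (real n + 2) * (F k^2 * F k'^2) * ((norm k + norm k') / (norm k + norm k')) * ((Mh n x + 2) / (Mh n x + 2))"
      by (simp add: W add.commute mult_ac)
    then show ?thesis using nz by (simp add: power_mult_distrib)
  qed
  have "sqrt ((real n + 1) * (real n + 2)) * (F k * F k') * a * b \<le> (?A * a^2 + ?B * b^2) / 2"
  proof (rule amgm)
    show "0 \<le> ?A" using Mpos hk by auto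
    show "0 \<le> ?B" using Mpos hk by (simp add: W)
    show "0 \<le> sqrt ((real n + 1) * (real n + 2)) * (F k * F k')" using Fp by simp
    show "(sqrt ((real n + 1) * (real n + 2)) * (F k * F k'))^2 \<le> ?A * ?B"
      by (subst AB) (simp add: power_mult_distrib)
  qed (use ab in auto)
  then show ?thesis by (simp add: mult_ac)
qed


definition dr2 :: "nat \<Rightarrow> config \<Rightarrow> config" where
  "dr2 n y = restrict (\<lambda>i. y (i + 2)) {..<n}"

lemma meas_dr2[measurable]: "dr2 n \<in> measurable (M (Suc (Suc n))) (M n)"
proof -
  have "(\<lambda>y. \<lambda>i\<in>{..<n}. y (i + 2)) \<in> measurable (M (Suc (Suc n))) (M n)"
    unfolding cfg_measure_def
  proof (rule measurable_restrict)
    fix i assume "i \<in> {..<n}"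
    then show "(\<lambda>y. y (i + 2)) \<in> measurable (Pi\<^sub>M {..<Suc (Suc n)} (\<lambda>_. lborel)) (lborel :: (real^3) measure)"
      by (intro measurable_component_singleton) auto
  qed
  then show ?thesis by (simp add: dr2_def[abs_def])
qed

lemma dr2_kcons2: "x \<in> space (M n) \<Longrightarrow> dr2 n (kcons k' (kcons k x n) (Suc n)) = x"
  by (auto simp: dr2_def kcons_def space_M PiE_iff extensional_def fun_eq_iff)

lemma kcons2_dr2: "y \<in> space (M (Suc (Suc n))) \<Longrightarrow> kcons (y 0) (kcons (y 1) (dr2 n y) n) (Suc n) = y"
proof
  fix i assume y: "y \<in> space (M (Suc (Suc n)))"
  show "kcons (y 0) (kcons (y 1) (dr2 n y) n) (Suc n) i = y i"
  proof (cases "i < Suc (Suc n)")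
    case True
    then show ?thesis
      by (cases i; cases "i - 1") (auto simp: kcons_def dr2_def numeral_2_eq_2)
  next
    case False
    then show ?thesis using y by (auto simp: kcons_def space_M PiE_iff extensional_def)
  qed
qed

lemma bb_core:
  fixes F :: "real^3 \<Rightarrow> real" and \<phi>a \<phi>b :: "config \<Rightarrow> real"
  assumes [measurable]: "F \<in> borel_measurable borel" and Fp: "\<And>k. 0 \<le> F k" and hard: "\<And>k. F k \<noteq> 0 \<Longrightarrow> 1 \<le> norm k"
    and [measurable]: "\<phi>a \<in> borel_measurable (M n)" and ap: "\<And>x. 0 \<le> \<phi>a x"
    and [measurable]: "\<phi>b \<in> borel_measurable (M (Suc (Suc n)))" and bp: "\<And>y. 0 \<le> \<phi>b y"
    and sb: "symf (Suc (Suc n)) \<phi>b"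
  shows "(\<integral>\<^sup>+x. (\<integral>\<^sup>+k. (\<integral>\<^sup>+k'. ennreal (sqrt ((real n + 1) * (real n + 2)) * \<phi>a x * (F k * F k') * \<phi>b (kcons k' (kcons k x n) (Suc n))) \<partial>lborel) \<partial>lborel) \<partial>M n)
     \<le> (\<integral>\<^sup>+k. (\<integral>\<^sup>+k'. ennreal (F k^2 * F k'^2 / (norm k + norm k')) \<partial>lborel) \<partial>lborel) * (\<integral>\<^sup>+x. ennreal ((Mh n x + 2) * \<phi>a x^2) \<partial>M n) / 2
       + (\<integral>\<^sup>+y. ennreal (Hf (Suc (Suc n)) y * \<phi>b y^2) \<partial>M (Suc (Suc n)))"
proof -
  let ?N = "Suc (Suc n)"
  let ?c = "(real n + 1) * (real n + 2)"
  have [measurable]: "(\<lambda>y. y 0) \<in> measurable (M ?N) (lborel :: (real^3) measure)" "(\<lambda>y. y 1) \<in> measurable (M ?N) (lborel :: (real^3) measure)"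
    using meas_comp_y[of 0 ?N] meas_comp_y[of 1 ?N] by simp_all
  have [measurable]: "(\<lambda>y. norm (y 0)) \<in> borel_measurable (M ?N)" "(\<lambda>y. norm (y 1)) \<in> borel_measurable (M ?N)"
    by (auto intro!: meas_norm_y)
  have y0b: "(\<lambda>y. y 0) \<in> borel_measurable (M ?N)" "(\<lambda>y. y 1) \<in> borel_measurable (M ?N)"
    using meas_comp_y[of 0 ?N] meas_comp_y[of 1 ?N] by simp_all
  have [measurable]: "(\<lambda>y. F (y 0)) \<in> borel_measurable (M ?N)" "(\<lambda>y. F (y 1)) \<in> borel_measurable (M ?N)"
    using measurable_compose[OF y0b(1) \<open>F \<in> borel_measurable borel\<close>] measurable_compose[OF y0b(2) \<open>F \<in> borel_measurable borel\<close>] by auto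
  have [measurable]: "(\<lambda>y. \<phi>a (dr2 n y)) \<in> borel_measurable (M ?N)"
    using measurable_compose[OF meas_dr2] by auto
  have [measurable]: "(\<lambda>y. Mh n (dr2 n y)) \<in> borel_measurable (M ?N)"
    using measurable_compose[OF meas_dr2 meas_Mh] by auto
  have [measurable]: "Wp ?N \<in> borel_measurable (M ?N)"
    unfolding Wp_def[abs_def] by measurable
  define Q where "Q y = ennreal (sqrt ?c * \<phi>a (dr2 n y) * (F (y 1) * F (y 0)) * \<phi>b y)" for y
  define QA where "QA y = ennreal (F (y 1)^2 * F (y 0)^2 / (norm (y 1) + norm (y 0)) * (Mh n (dr2 n y) + 2) * \<phi>a (dr2 n y)^2 / 2)" for y
  define QB where "QB y = ennreal (?c * Wp ?N y * \<phi>b y^2 / 2)" for y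
  have mF: "(\<lambda>y. F (y 0)) \<in> borel_measurable (M ?N)" "(\<lambda>y. F (y 1)) \<in> borel_measurable (M ?N)"
    "(\<lambda>y. \<phi>a (dr2 n y)) \<in> borel_measurable (M ?N)" "(\<lambda>y. Mh n (dr2 n y)) \<in> borel_measurable (M ?N)"
    "(\<lambda>y. norm (y 0)) \<in> borel_measurable (M ?N)" "(\<lambda>y. norm (y 1)) \<in> borel_measurable (M ?N)"
    "\<phi>b \<in> borel_measurable (M ?N)" "Wp ?N \<in> borel_measurable (M ?N)"
    by measurable
  have [measurable]: "Q \<in> borel_measurable (M ?N)"
    unfolding Q_def[abs_def]
    by (rule measurable_compose[OF _ measurable_ennreal]) (intro borel_measurable_times borel_measurable_const mF)
  have [measurable]: "QA \<in> borel_measurable (M ?N)"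
    unfolding QA_def[abs_def]
    by (rule measurable_compose[OF _ measurable_ennreal])
       (intro borel_measurable_times borel_measurable_const borel_measurable_divide borel_measurable_power borel_measurable_add mF)
  have [measurable]: "QB \<in> borel_measurable (M ?N)"
    unfolding QB_def[abs_def]
    by (rule measurable_compose[OF _ measurable_ennreal])
       (intro borel_measurable_times borel_measurable_const borel_measurable_divide borel_measurable_power mF)
  have "(\<integral>\<^sup>+x. (\<integral>\<^sup>+k. (\<integral>\<^sup>+k'. ennreal (sqrt ?c * \<phi>a x * (F k * F k') * \<phi>b (kcons k' (kcons k x n) (Suc n))) \<partial>lborel) \<partial>lborel) \<partial>M n)
      = (\<integral>\<^sup>+x. (\<integral>\<^sup>+k. (\<integral>\<^sup>+k'. Q (kcons k' (kcons k x n) (Suc n)) \<partial>lborel) \<partial>lborel) \<partial>M n)"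
    by (intro nn_integral_cong) (simp add: Q_def dr2_kcons2 kcons2_01)
  also have "\<dots> = (\<integral>\<^sup>+y. Q y \<partial>M ?N)"
    by (rule nn_kcons2[symmetric]) simp
  also have "\<dots> \<le> (\<integral>\<^sup>+y. QA y + QB y \<partial>M ?N)"
  proof (intro nn_integral_mono)
    fix y assume y: "y \<in> space (M ?N)"
    have Wn: "0 \<le> Wp ?N y" using Mh_nonneg[of ?N y] by (auto simp: Wp_def)
    have An: "0 \<le> F (y 1)^2 * F (y 0)^2 / (norm (y 1) + norm (y 0)) * (Mh n (dr2 n y) + 2) * \<phi>a (dr2 n y)^2 / 2"
      using Mh_nonneg[of n "dr2 n y"] by simp
    have Bn: "0 \<le> ?c * Wp ?N y * \<phi>b y^2 / 2" using Wn by simp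
    have "sqrt ?c * \<phi>a (dr2 n y) * (F (y 1) * F (y 0)) * \<phi>b y
      \<le> (F (y 1)^2 * F (y 0)^2 / (norm (y 1) + norm (y 0)) * (Mh n (dr2 n y) + 2) * \<phi>a (dr2 n y)^2 + ?c * Wp ?N y * \<phi>b y^2) / 2"
      using bb_pointwise[OF Fp hard ap[of "dr2 n y"] bp[of y], where k="y 1" and k'="y 0" and x="dr2 n y" and n=n] kcons2_dr2[OF y]
      by simp
    then have "Q y \<le> ennreal (F (y 1)^2 * F (y 0)^2 / (norm (y 1) + norm (y 0)) * (Mh n (dr2 n y) + 2) * \<phi>a (dr2 n y)^2 / 2 + ?c * Wp ?N y * \<phi>b y^2 / 2)"
      unfolding Q_def by (intro ennreal_leI) (simp add: add_divide_distrib)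
    also have "\<dots> = QA y + QB y"
      unfolding QA_def QB_def using An Bn by (simp add: ennreal_plus)
    finally show "Q y \<le> QA y + QB y" .
  qed
  also have "\<dots> = (\<integral>\<^sup>+y. QA y \<partial>M ?N) + (\<integral>\<^sup>+y. QB y \<partial>M ?N)"
    by (rule nn_integral_add) simp_all
  also have "(\<integral>\<^sup>+y. QA y \<partial>M ?N) = (\<integral>\<^sup>+k. (\<integral>\<^sup>+k'. ennreal (F k^2 * F k'^2 / (norm k + norm k')) \<partial>lborel) \<partial>lborel) * (\<integral>\<^sup>+x. ennreal ((Mh n x + 2) * \<phi>a x^2) \<partial>M n) / 2"
  proof -
    define G where "G k k' = ennreal (F k^2 * F k'^2 / (norm k + norm k'))" for k k' :: "real^3"
    define D where "D = (\<integral>\<^sup>+k. (\<integral>\<^sup>+k'. G k k' \<partial>lborel) \<partial>lborel)"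
    have [measurable]: "case_prod G \<in> borel_measurable (lborel \<Otimes>\<^sub>M lborel)"
      unfolding G_def[abs_def] by measurable
    have [measurable]: "(\<lambda>k. \<integral>\<^sup>+k'. G k k' \<partial>lborel) \<in> borel_measurable lborel"
      by measurable
    have "(\<integral>\<^sup>+y. QA y \<partial>M ?N) = (\<integral>\<^sup>+x. (\<integral>\<^sup>+k. (\<integral>\<^sup>+k'. QA (kcons k' (kcons k x n) (Suc n)) \<partial>lborel) \<partial>lborel) \<partial>M n)"
      by (rule nn_kcons2) simp
    also have "\<dots> = (\<integral>\<^sup>+x. (\<integral>\<^sup>+k. (\<integral>\<^sup>+k'. ennreal ((Mh n x + 2) * \<phi>a x^2 / 2) * G k k' \<partial>lborel) \<partial>lborel) \<partial>M n)"
    proof (intro nn_integral_cong)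
      fix x k k' assume x: "x \<in> space (M n)"
      have "0 \<le> (Mh n x + 2) * \<phi>a x^2 / 2" using Mh_nonneg[of n x] by simp
      moreover have "0 \<le> F k^2 * F k'^2 / (norm k + norm k')" by simp
      ultimately show "QA (kcons k' (kcons k x n) (Suc n)) = ennreal ((Mh n x + 2) * \<phi>a x^2 / 2) * G k k'"
        using x by (simp add: QA_def G_def dr2_kcons2 kcons2_01 ennreal_mult'[symmetric] mult_ac add.commute)
    qed
    also have "\<dots> = (\<integral>\<^sup>+x. ennreal ((Mh n x + 2) * \<phi>a x^2 / 2) * D \<partial>M n)"
    proof (intro nn_integral_cong)
      fix x
      have "(\<integral>\<^sup>+k. (\<integral>\<^sup>+k'. ennreal ((Mh n x + 2) * \<phi>a x^2 / 2) * G k k' \<partial>lborel) \<partial>lborel)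
          = (\<integral>\<^sup>+k. ennreal ((Mh n x + 2) * \<phi>a x^2 / 2) * (\<integral>\<^sup>+k'. G k k' \<partial>lborel) \<partial>lborel)"
        by (intro nn_integral_cong nn_integral_cmult) measurable
      also have "\<dots> = ennreal ((Mh n x + 2) * \<phi>a x^2 / 2) * D"
        unfolding D_def by (rule nn_integral_cmult) measurable
      finally show "(\<integral>\<^sup>+k. (\<integral>\<^sup>+k'. ennreal ((Mh n x + 2) * \<phi>a x^2 / 2) * G k k' \<partial>lborel) \<partial>lborel) = ennreal ((Mh n x + 2) * \<phi>a x^2 / 2) * D" .
    qed
    also have "\<dots> = (\<integral>\<^sup>+x. ennreal ((Mh n x + 2) * \<phi>a x^2) \<partial>M n) / 2 * D"
    proof -
      have "(\<integral>\<^sup>+x. ennreal ((Mh n x + 2) * \<phi>a x^2 / 2) * D \<partial>M n) = (\<integral>\<^sup>+x. ennreal ((Mh n x + 2) * \<phi>a x^2) / 2 \<partial>M n) * D"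
        using Mh_nonneg by (subst nn_integral_multc) (auto simp: divide_ennreal[symmetric])
      also have "(\<integral>\<^sup>+x. ennreal ((Mh n x + 2) * \<phi>a x^2) / 2 \<partial>M n) = (\<integral>\<^sup>+x. ennreal ((Mh n x + 2) * \<phi>a x^2) \<partial>M n) / 2"
        by (rule nn_integral_divide) measurable
      finally show ?thesis .
    qed
    also have "(\<integral>\<^sup>+x. ennreal ((Mh n x + 2) * \<phi>a x^2) \<partial>M n) / 2 * D = D * (\<integral>\<^sup>+x. ennreal ((Mh n x + 2) * \<phi>a x^2) \<partial>M n) / 2"
      by (subst mult.commute) (rule ennreal_times_divide)
    finally show ?thesis by (simp only: D_def G_def)
  qed
  also have "(\<integral>\<^sup>+y. QB y \<partial>M ?N) \<le> (\<integral>\<^sup>+y. ennreal (Hf ?N y * \<phi>b y^2) \<partial>M ?N)"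
  proof -
    define \<Phi> where "\<Phi> y = ennreal (\<phi>b y^2)" for y
    have [measurable]: "\<Phi> \<in> borel_measurable (M ?N)" unfolding \<Phi>_def[abs_def] by measurable
    have s\<Phi>: "symf ?N \<Phi>" using sb by (simp add: symf_def \<Phi>_def)
    have "(\<integral>\<^sup>+y. QB y \<partial>M ?N) = ennreal (?c / 2) * (\<integral>\<^sup>+y. \<Phi> y * ennreal (Wp ?N y) \<partial>M ?N)"
    proof -
      have "(\<integral>\<^sup>+y. QB y \<partial>M ?N) = (\<integral>\<^sup>+y. ennreal (?c / 2) * (\<Phi> y * ennreal (Wp ?N y)) \<partial>M ?N)"
      proof (intro nn_integral_cong)
        fix y
        have "0 \<le> Wp ?N y" using Mh_nonneg[of ?N y] by (auto simp: Wp_def)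
        then show "QB y = ennreal (?c / 2) * (\<Phi> y * ennreal (Wp ?N y))"
          by (simp add: QB_def \<Phi>_def ennreal_mult'[symmetric] ennreal_mult''[symmetric] mult_ac)
      qed
      also have "\<dots> = ennreal (?c / 2) * (\<integral>\<^sup>+y. \<Phi> y * ennreal (Wp ?N y) \<partial>M ?N)"
        by (rule nn_integral_cmult) measurable
      finally show ?thesis .
    qed
    also have "\<dots> = (of_nat ?N * of_nat (?N - 1) * (\<integral>\<^sup>+y. \<Phi> y * ennreal (Wp ?N y) \<partial>M ?N)) / 2"
    proof -
      have e: "real (?N * (?N - 1)) = ?c" by (simp add: algebra_simps)
      have "(of_nat ?N * of_nat (?N - 1) :: ennreal) = of_nat (?N * (?N - 1))"
        by (rule of_nat_mult[symmetric])
      also have "\<dots> = ennreal (real (?N * (?N - 1)))"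
        by (rule ennreal_of_nat_eq_real_of_nat)
      also have "\<dots> = ennreal ?c" by (simp only: e)
      finally have e2: "(of_nat ?N * of_nat (?N - 1) :: ennreal) = ennreal ?c" .
      have e3: "ennreal (?c / 2) = ennreal ?c / 2"
        by (subst divide_ennreal[symmetric]) auto
      have "ennreal (?c / 2) = (of_nat ?N * of_nat (?N - 1)) / 2"
        by (simp only: e2 e3)
      then show ?thesis by (simp add: ennreal_times_divide mult_ac)
    qed
    also have "\<dots> \<le> (2 * (\<integral>\<^sup>+y. \<Phi> y * ennreal (Hf ?N y) \<partial>M ?N)) / 2"
      by (intro divide_right_mono_ennreal pair_bound[OF s\<Phi>]) auto
    also have "\<dots> = (\<integral>\<^sup>+y. \<Phi> y * ennreal (Hf ?N y) \<partial>M ?N)"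
      by (subst mult.commute) (rule ennreal_mult_divide_eq, auto)
    also have "\<dots> = (\<integral>\<^sup>+y. ennreal (Hf ?N y * \<phi>b y^2) \<partial>M ?N)"
      by (intro nn_integral_cong) (simp add: \<Phi>_def ennreal_mult'[symmetric] Hf_nonneg mult.commute)
    finally show ?thesis .
  qed
  finally show ?thesis by (simp add: add_mono)
qed


definition Gb :: "real^3 \<Rightarrow> real" where
  "Gb k = (if 1 \<le> norm k then 2 * norm k powr (-3/2) else 0)"

lemma Gb_nonneg: "0 \<le> Gb k" by (simp add: Gb_def)

lemma Gb_hard: "Gb k \<noteq> 0 \<Longrightarrow> 1 \<le> norm k" by (simp add: Gb_def split: if_splits)

lemma meas_Gb[measurable]: "Gb \<in> borel_measurable borel"
  unfolding Gb_def[abs_def] by measurable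

lemma rho_le: "k \<noteq> 0 \<Longrightarrow> rho k \<le> norm k powr (-1/2)"
proof -
  assume k: "k \<noteq> 0"
  have a: "(2 * pi) powr (-3/2) \<le> 1"
  proof -
    have "(2 * pi) powr (-3/2) \<le> 1 powr (-3/2)" using pi_gt3 by (intro powr_mono2') auto
    then show ?thesis by simp
  qed
  have b: "(2 * norm k) powr (-1/2) \<le> norm k powr (-1/2)" using k by (intro powr_mono2') auto
  have "rho k \<le> 1 * norm k powr (-1/2)"
    unfolding rho_def by (intro mult_mono a b) auto
  then show ?thesis by simp
qed

lemma rho_nonneg: "0 \<le> rho k" by (simp add: rho_def)

lemma fB_bound:
  assumes kap: "1 < kappa"
  shows "cmod (fB g kappa s j k) \<le> \<bar>g\<bar> * Gb k"
proof (cases "kappa \<le> norm k \<and> norm k < s")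
  case False then show ?thesis by (auto simp: fB_def Gb_def)
next
  case True
  then have k1: "1 \<le> norm k" using kap by simp
  have k0: "k \<noteq> 0" proof assume "k = 0" then show False using k1 by simp qed
  have nk: "0 < norm k" using k1 by linarith
  have "cmod (fB g kappa s j k) = \<bar>k $ j * betaG g k\<bar>"
    unfolding fB_def by (subst if_P[OF True]) (rule norm_of_real)
  also have "\<dots> = \<bar>k $ j\<bar> * (\<bar>g\<bar> * rho k / (1/2 * (norm k)^2 + norm k))"
  proof -
    have "0 < 1/2 * (norm k)^2 + norm k" using nk by (simp add: add_pos_nonneg)
    then show ?thesis using rho_nonneg[of k] by (simp add: betaG_def abs_mult abs_divide)
  qed
  also have "\<dots> \<le> norm k * (\<bar>g\<bar> * norm k powr (-1/2) / (1/2 * (norm k)^2))"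
  proof (intro mult_mono divide_mono mult_left_mono rho_le k0)
    show "\<bar>k $ j\<bar> \<le> norm k" by (rule component_le_norm_cart)
  qed (use nk in \<open>auto simp: rho_nonneg\<close>)
  also have "\<dots> = \<bar>g\<bar> * (2 * (norm k * norm k powr (-1/2) / (norm k)^2))"
    by (simp add: field_simps)
  also have "norm k * norm k powr (-1/2) / (norm k)^2 = norm k powr (-3/2)"
  proof -
    have "norm k * norm k powr (-1/2) = norm k powr (1/2)"
      using nk powr_add[of "norm k" 1 "-1/2"] by simp
    moreover have "norm k powr (-3/2) * (norm k)^2 = norm k powr (1/2)"
      using nk powr_add[of "norm k" "-3/2" 2] by (simp add: powr_numeral)
    ultimately show ?thesis using nk by (simp add: field_simps)
  qed
  finally show ?thesis using k1 by (simp add: Gb_def)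
qed

lemma fB_hard: "1 < kappa \<Longrightarrow> fB g kappa s j k \<noteq> 0 \<Longrightarrow> 1 \<le> norm k"
  by (auto simp: fB_def split: if_splits)

lemma fB_zero: "1 < kappa \<Longrightarrow> fB g kappa s j 0 = 0"
  by (simp add: fB_def)

lemma fPhi_zero: "0 < tau \<Longrightarrow> fPhi tau Lam 0 = 0"
  by (simp add: fPhi_def)

lemma CG_fin: "(\<integral>\<^sup>+k. ennreal (Gb k^2 / norm k) \<partial>lborel) < \<infinity>"
proof -
  have "(\<integral>\<^sup>+k. ennreal (Gb k^2 / norm k) \<partial>lborel) \<le> (\<integral>\<^sup>+k. ennreal 4 * ennreal (indicator {k. 1 \<le> norm k} k * norm k powr (-7/2)) \<partial>(lborel :: (real^3) measure))"
  proof (intro nn_integral_mono)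
    fix k :: "real^3"
    show "ennreal (Gb k^2 / norm k) \<le> ennreal 4 * ennreal (indicator {k. 1 \<le> norm k} k * norm k powr (-7/2))"
    proof (cases "1 \<le> norm k")
      case True
      have nk: "0 < norm k" using True by linarith
      have "Gb k^2 / norm k = 4 * norm k powr (-4)"
      proof -
        have "Gb k^2 = 4 * (norm k powr (-3/2))^2" using True by (simp add: Gb_def power_mult_distrib)
        also have "(norm k powr (-3/2))^2 = norm k powr (-3)"
          using nk by (simp add: powr_realpow[symmetric] powr_powr)
        finally have "Gb k^2 / norm k = 4 * (norm k powr (-3) / norm k)" by simp
        also have "norm k powr (-3) / norm k = norm k powr (-4)"
        proof -
          have "norm k powr (-4) * norm k = norm k powr (-3)" using nk powr_add[of "norm k" "-4" 1] by simp
          then show ?thesis using nk by (simp add: field_simps)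
        qed
        finally show ?thesis .
      qed
      moreover have "norm k powr (-4) \<le> norm k powr (-7/2)" using True by (intro powr_mono) auto
      ultimately show ?thesis using True by (auto simp: ennreal_mult intro!: mult_left_mono ennreal_leI)
    next
      case False then show ?thesis by (simp add: Gb_def)
    qed
  qed
  also have "\<dots> = ennreal 4 * (\<integral>\<^sup>+k. ennreal (indicator {k. 1 \<le> norm k} k * norm k powr (-7/2)) \<partial>(lborel :: (real^3) measure))"
    by (rule nn_integral_cmult) measurable
  also have "\<dots> < \<infinity>" using R1 by (simp add: ennreal_mult_less_top)
  finally show ?thesis .
qed


lemma powr_sq: "0 < (x::real) \<Longrightarrow> (x powr r)^2 = x powr (2 * r)"
  by (simp only: power2_eq_square powr_add[symmetric] mult_2)

lemma pw_D:
  fixes a b :: real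
  assumes a: "1 \<le> a" and b: "1 \<le> b"
  shows "(2 * a powr (-3/2))^2 * (2 * b powr (-3/2))^2 / (a + b) \<le> 16 * (a powr (-7/2) * b powr (-7/2))"
proof -
  have ap: "0 < a" and bp: "0 < b" using a b by auto
  have ea: "(2 * a powr (-3/2))^2 = 4 * (a powr (-7/2) * sqrt a)"
  proof -
    have "(2 * a powr (-3/2))^2 = 4 * a powr (-3)" using ap by (simp add: power_mult_distrib powr_sq)
    moreover have "a powr (-3) = a powr (-7/2) * a powr (1/2)" using ap powr_add[of a "-7/2" "1/2"] by simp
    ultimately show ?thesis using ap by (simp add: powr_half_sqrt)
  qed
  have eb: "(2 * b powr (-3/2))^2 = 4 * (b powr (-7/2) * sqrt b)"
  proof -
    have "(2 * b powr (-3/2))^2 = 4 * b powr (-3)" using bp by (simp add: power_mult_distrib powr_sq)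
    moreover have "b powr (-3) = b powr (-7/2) * b powr (1/2)" using bp powr_add[of b "-7/2" "1/2"] by simp
    ultimately show ?thesis using bp by (simp add: powr_half_sqrt)
  qed
  have s: "sqrt a * sqrt b \<le> a + b"
  proof -
    have "sqrt a * sqrt b = sqrt (a * b)" by (simp add: real_sqrt_mult)
    also have "\<dots> \<le> (a + b) / 2" using ap bp by (intro arith_geo_mean_sqrt) auto
    finally show ?thesis using ap bp by simp
  qed
  have "(2 * a powr (-3/2))^2 * (2 * b powr (-3/2))^2 / (a + b) = 16 * (a powr (-7/2) * b powr (-7/2)) * ((sqrt a * sqrt b) / (a + b))"
    unfolding ea eb using ap bp by (simp add: field_simps)
  also have "\<dots> \<le> 16 * (a powr (-7/2) * b powr (-7/2)) * 1"
    using s ap bp by (intro mult_left_mono) auto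
  finally show ?thesis by simp
qed

lemma DG_fin: "(\<integral>\<^sup>+k. (\<integral>\<^sup>+k'. ennreal (Gb k^2 * Gb k'^2 / (norm k + norm k')) \<partial>lborel) \<partial>lborel) < \<infinity>"
proof -
  define u where "u k = ennreal (indicator {k. 1 \<le> norm k} k * norm k powr (-7/2))" for k :: "real^3"
  have [measurable]: "u \<in> borel_measurable lborel" unfolding u_def[abs_def] by measurable
  have pw: "ennreal (Gb k^2 * Gb k'^2 / (norm k + norm k')) \<le> ennreal 16 * u k * u k'" for k k' :: "real^3"
  proof (cases "1 \<le> norm k \<and> 1 \<le> norm k'")
    case True
    then have "Gb k^2 * Gb k'^2 / (norm k + norm k') \<le> 16 * (norm k powr (-7/2) * norm k' powr (-7/2))"
      using pw_D[of "norm k" "norm k'"] by (simp add: Gb_def)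
    then have "ennreal (Gb k^2 * Gb k'^2 / (norm k + norm k')) \<le> ennreal (16 * (norm k powr (-7/2) * norm k' powr (-7/2)))"
      by (rule ennreal_leI)
    also have "\<dots> = ennreal 16 * u k * u k'"
      using True by (simp add: u_def ennreal_mult mult.assoc)
    finally show ?thesis .
  next
    case False then show ?thesis by (auto simp: Gb_def)
  qed
  have "(\<integral>\<^sup>+k. (\<integral>\<^sup>+k'. ennreal (Gb k^2 * Gb k'^2 / (norm k + norm k')) \<partial>lborel) \<partial>lborel)
      \<le> (\<integral>\<^sup>+k. (\<integral>\<^sup>+k'. ennreal 16 * u k * u k' \<partial>lborel) \<partial>lborel)"
    by (intro nn_integral_mono pw)
  also have "\<dots> = (\<integral>\<^sup>+k. ennreal 16 * u k * (\<integral>\<^sup>+k'. u k' \<partial>lborel) \<partial>lborel)"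
    by (intro nn_integral_cong nn_integral_cmult) measurable
  also have "\<dots> = ennreal 16 * (\<integral>\<^sup>+k. u k \<partial>lborel) * (\<integral>\<^sup>+k'. u k' \<partial>lborel)"
    by (subst nn_integral_multc) (measurable, subst nn_integral_cmult, measurable)
  also have "\<dots> < \<infinity>" using R1 unfolding u_def by (simp add: ennreal_mult_less_top)
  finally show ?thesis .
qed

lemma CPhi_fin:
  assumes tau: "0 < tau" and L: "Lam < 2"
  shows "(\<integral>\<^sup>+k. ennreal ((cmod (fPhi tau Lam k))^2 / norm k) \<partial>lborel)
      \<le> (\<integral>\<^sup>+k. ennreal (indicator {k. 0 < norm k \<and> norm k < 2} k * norm k powr (-2)) \<partial>(lborel :: (real^3) measure))"
proof (intro nn_integral_mono)
  fix k :: "real^3"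
  show "ennreal ((cmod (fPhi tau Lam k))^2 / norm k) \<le> ennreal (indicator {k. 0 < norm k \<and> norm k < 2} k * norm k powr (-2))"
  proof (cases "tau \<le> norm k \<and> norm k < Lam")
    case True
    then have nk: "0 < norm k" and n2: "norm k < 2" using tau L by auto
    have "(cmod (fPhi tau Lam k))^2 / norm k = (rho k)^2 / norm k"
      using True rho_nonneg[of k] by (simp add: fPhi_def)
    also have "\<dots> \<le> (norm k powr (-1/2))^2 / norm k"
      using rho_le[of k] rho_nonneg[of k] nk by (intro divide_right_mono power_mono) auto
    also have "\<dots> = norm k powr (-2)"
    proof -
      have e1: "(norm k powr (-1/2))^2 = norm k powr (-1)" using nk by (simp add: powr_sq)
      have eq: "norm k powr (-2) * norm k = norm k powr (-1)" using nk powr_add[of "norm k" "-2" 1] by simp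
      have "(norm k powr (-1/2))^2 / norm k = norm k powr (-2) * norm k / norm k"
        by (simp only: e1 eq)
      also have "\<dots> = norm k powr (-2)" using nk by simp
      finally show ?thesis .
    qed
    finally show ?thesis using nk n2 by (simp add: ennreal_leI)
  next
    case False then show ?thesis by (auto simp: fPhi_def)
  qed
qed


lemma norm_int_le:
  fixes f :: "'a \<Rightarrow> complex"
  shows "ennreal (norm (integral\<^sup>L N f)) \<le> (\<integral>\<^sup>+x. ennreal (norm (f x)) \<partial>N)"
proof (cases "integrable N f")
  case True then show ?thesis by (rule integral_norm_bound_ennreal)
next
  case False then show ?thesis by (simp add: not_integrable_integral_eq)
qed

lemma ann_le:
  "ennreal (cmod (ann f \<psi> n x)) \<le> ennreal (sqrt (real n + 1)) * (\<integral>\<^sup>+k. ennreal (cmod (f k) * cmod (\<psi> (Suc n) (kcons k x n))) \<partial>lborel)"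
proof -
  have "cmod (ann f \<psi> n x) = sqrt (real n + 1) * cmod (\<integral>k. f k * \<psi> (Suc n) (kcons k x n) \<partial>lborel)"
    by (simp add: ann_def norm_mult)
  then have "ennreal (cmod (ann f \<psi> n x)) = ennreal (sqrt (real n + 1)) * ennreal (cmod (\<integral>k. f k * \<psi> (Suc n) (kcons k x n) \<partial>lborel))"
    by (simp add: ennreal_mult)
  also have "\<dots> \<le> ennreal (sqrt (real n + 1)) * (\<integral>\<^sup>+k. ennreal (cmod (f k * \<psi> (Suc n) (kcons k x n))) \<partial>lborel)"
    by (intro mult_left_mono norm_int_le) auto
  finally show ?thesis by (simp add: norm_mult)
qed

lemma sector_le:
  "ennreal (cmod (\<integral>x. cnj (\<psi> n x) * hh x \<partial>M n)) \<le> (\<integral>\<^sup>+x. ennreal (cmod (\<psi> n x)) * ennreal (cmod (hh x)) \<partial>M n)"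
  using norm_int_le[of "M n" "\<lambda>x. cnj (\<psi> n x) * hh x"] by (simp add: norm_mult ennreal_mult)

lemma sum_bound:
  fixes a :: "nat \<Rightarrow> complex"
  assumes le: "\<And>n. ennreal (cmod (a n)) \<le> e n" and fin: "(\<Sum>n. e n) \<noteq> top"
  shows "\<bar>Re (suminf a)\<bar> \<le> enn2real (\<Sum>n. e n)"
proof -
  have s1: "(\<Sum>n. ennreal (cmod (a n))) \<le> (\<Sum>n. e n)" by (intro suminf_le le) auto
  then have nt: "(\<Sum>n. ennreal (cmod (a n))) \<noteq> top" using fin by (auto simp: top_unique)
  then have sm: "summable (\<lambda>n. cmod (a n))" by (intro summable_suminf_not_top) auto
  have eq: "(\<Sum>n. ennreal (cmod (a n))) = ennreal (\<Sum>n. cmod (a n))"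
    using sm by (intro suminf_ennreal2) auto
  have "\<bar>Re (suminf a)\<bar> \<le> cmod (suminf a)" by (rule abs_Re_le_cmod)
  also have "\<dots> \<le> (\<Sum>n. cmod (a n))" using sm by (rule summable_norm)
  also have "\<dots> \<le> enn2real (\<Sum>n. e n)"
  proof -
    have "ennreal (\<Sum>n. cmod (a n)) \<le> ennreal (enn2real (\<Sum>n. e n))"
      using s1 eq fin by (simp add: ennreal_enn2real_if)
    then show ?thesis by (subst (asm) ennreal_le_iff) auto
  qed
  finally show ?thesis .
qed

lemma fock_meas: "fock_vec \<psi> \<Longrightarrow> \<psi> n \<in> borel_measurable (M n)"
  by (simp add: fock_vec_def)

lemma fock_meas_cmod[measurable]: "fock_vec \<psi> \<Longrightarrow> (\<lambda>x. cmod (\<psi> n x)) \<in> borel_measurable (M n)"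
  using fock_meas[of \<psi> n] by measurable

lemma fock_sym: "fock_vec \<psi> \<Longrightarrow> symf n (\<lambda>x. cmod (\<psi> n x))"
  by (simp add: fock_vec_def symf_def)

lemma fock_normsq_eq:
  assumes "fock_vec \<psi>"
  shows "(\<Sum>n. \<integral>\<^sup>+x. ennreal ((cmod (\<psi> n x))^2) \<partial>M n) = ennreal (fock_normsq \<psi>)"
proof -
  have int: "\<And>n. integrable (M n) (\<lambda>x. (cmod (\<psi> n x))\<^sup>2)" and sm: "summable (\<lambda>n. \<integral>x. (cmod (\<psi> n x))\<^sup>2 \<partial>M n)"
    using assms by (auto simp: fock_vec_def)
  have "(\<Sum>n. \<integral>\<^sup>+x. ennreal ((cmod (\<psi> n x))^2) \<partial>M n) = (\<Sum>n. ennreal (\<integral>x. (cmod (\<psi> n x))\<^sup>2 \<partial>M n))"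
    using int by (simp add: nn_integral_eq_integral)
  also have "\<dots> = ennreal (\<Sum>n. \<integral>x. (cmod (\<psi> n x))\<^sup>2 \<partial>M n)"
    using sm by (intro suminf_ennreal2) auto
  finally show ?thesis by (simp add: fock_normsq_def)
qed

lemma fock_normsq_nonneg: "fock_vec \<psi> \<Longrightarrow> 0 \<le> fock_normsq \<psi>"
  unfolding fock_normsq_def fock_vec_def by (intro suminf_nonneg) auto

definition Hsec :: "real^3 \<Rightarrow> fock \<Rightarrow> nat \<Rightarrow> ennreal" where
  "Hsec P \<psi> n = (\<integral>\<^sup>+ x. ennreal ((1/2 * (norm (P - Pf n x))\<^sup>2 + (\<Sum>i<n. norm (x i))) * (cmod (\<psi> n x))\<^sup>2) \<partial>M n)"

lemma H0_eq: "H0_form P \<psi> = (\<Sum>n. Hsec P \<psi> n)"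
  by (simp add: H0_form_def Hsec_def)

lemma Hn_le: "(\<integral>\<^sup>+x. ennreal (Hf n x * (cmod (\<psi> n x))^2) \<partial>M n) \<le> Hsec P \<psi> n"
  unfolding Hsec_def
proof (intro nn_integral_mono ennreal_leI mult_right_mono)
  fix x show "Hf n x \<le> 1/2 * (norm (P - Pf n x))\<^sup>2 + (\<Sum>i<n. norm (x i))" by (simp add: Hf_def)
qed simp

lemma meas_Pf[measurable]: "Pf n \<in> borel_measurable (M n)"
proof -
  have "\<And>i. i \<in> {..<n} \<Longrightarrow> (\<lambda>x. x i) \<in> borel_measurable (M n)" using meas_comp_y by simp
  then show ?thesis unfolding Pf_def[abs_def] by (intro borel_measurable_sum) auto
qed

lemma meas_sumnorm[measurable]: "(\<lambda>x. \<Sum>i<n. norm (x i)) \<in> borel_measurable (M n)"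
  using meas_Hf[of n] by (simp add: Hf_def[abs_def])

lemma Kn_le: assumes "fock_vec \<psi>" shows "(\<integral>\<^sup>+x. ennreal ((norm (P - Pf n x))^2 * (cmod (\<psi> n x))^2) \<partial>M n) \<le> 2 * Hsec P \<psi> n"
proof -
  have "(\<integral>\<^sup>+x. ennreal ((norm (P - Pf n x))^2 * (cmod (\<psi> n x))^2) \<partial>M n)
     \<le> (\<integral>\<^sup>+x. 2 * ennreal ((1/2 * (norm (P - Pf n x))\<^sup>2 + (\<Sum>i<n. norm (x i))) * (cmod (\<psi> n x))\<^sup>2) \<partial>M n)"
  proof (intro nn_integral_mono)
    fix x
    have "(norm (P - Pf n x))^2 * (cmod (\<psi> n x))^2 \<le> 2 * ((1/2 * (norm (P - Pf n x))\<^sup>2 + (\<Sum>i<n. norm (x i))) * (cmod (\<psi> n x))\<^sup>2)"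
    proof -
      have "0 \<le> (\<Sum>i<n. norm (x i))" by (intro sum_nonneg) auto
      then show ?thesis by (simp add: algebra_simps mult_nonneg_nonneg)
    qed
    then have "ennreal ((norm (P - Pf n x))^2 * (cmod (\<psi> n x))^2) \<le> ennreal (2 * ((1/2 * (norm (P - Pf n x))\<^sup>2 + (\<Sum>i<n. norm (x i))) * (cmod (\<psi> n x))\<^sup>2))"
      by (rule ennreal_leI)
    then show "ennreal ((norm (P - Pf n x))^2 * (cmod (\<psi> n x))^2) \<le> 2 * ennreal ((1/2 * (norm (P - Pf n x))\<^sup>2 + (\<Sum>i<n. norm (x i))) * (cmod (\<psi> n x))\<^sup>2)"
      by (simp only: ennreal_mult'[of 2] ennreal_numeral)
  qed
  also have "\<dots> = 2 * Hsec P \<psi> n"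
    unfolding Hsec_def using \<open>fock_vec \<psi>\<close> by (intro nn_integral_cmult) measurable
  finally show ?thesis .
qed


lemma amgm_enn: "(a::ennreal) * b \<le> (a^2 + b^2) / 2"
proof -
  have "2 * a * b \<le> a^2 + b^2" by (rule sum_of_squares_ge_ennreal)
  then have "(2 * (a * b)) / 2 \<le> (a^2 + b^2) / 2" by (intro divide_right_mono_ennreal) (simp add: mult.assoc)
  moreover have "(2 * (a * b)) / 2 = a * b"
    by (subst mult.commute) (rule ennreal_mult_divide_eq, auto)
  ultimately show ?thesis by simp
qed

lemma aopF:
  fixes F :: "real^3 \<Rightarrow> real"
  assumes fv: "fock_vec \<psi>" and [measurable]: "F \<in> borel_measurable borel" and Fp: "\<And>k. 0 \<le> F k" and F0: "F 0 = 0"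
  shows "of_nat (Suc n) * (\<integral>\<^sup>+x. (\<integral>\<^sup>+k. ennreal (F k * cmod (\<psi> (Suc n) (kcons k x n))) \<partial>lborel)^2 \<partial>M n)
    \<le> (\<integral>\<^sup>+k. ennreal (F k^2 / norm k) \<partial>lborel) * (\<integral>\<^sup>+y. ennreal (Hf (Suc n) y * (cmod (\<psi> (Suc n) y))^2) \<partial>M (Suc n))"
proof -
  define \<Phi> where "\<Phi> y = ennreal ((cmod (\<psi> (Suc n) y))^2)" for y
  have [measurable]: "\<Phi> \<in> borel_measurable (M (Suc n))" unfolding \<Phi>_def[abs_def] using fv by measurable
  have s: "symf (Suc n) \<Phi>" using fock_sym[OF fv, of "Suc n"] by (simp add: symf_def \<Phi>_def)
  have "of_nat (Suc n) * (\<integral>\<^sup>+x. (\<integral>\<^sup>+k. ennreal (F k * cmod (\<psi> (Suc n) (kcons k x n))) \<partial>lborel)^2 \<partial>M n)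
    \<le> of_nat (Suc n) * ((\<integral>\<^sup>+k. ennreal (F k^2 / norm k) \<partial>lborel) * (\<integral>\<^sup>+y. ennreal (norm (y 0) * (cmod (\<psi> (Suc n) y))^2) \<partial>M (Suc n)))"
    by (intro mult_left_mono aop_bound) (use fv Fp F0 in auto)
  also have "(\<integral>\<^sup>+y. ennreal (norm (y 0) * (cmod (\<psi> (Suc n) y))^2) \<partial>M (Suc n)) = (\<integral>\<^sup>+y. \<Phi> y * ennreal (norm (y 0)) \<partial>M (Suc n))"
    by (intro nn_integral_cong) (simp add: \<Phi>_def ennreal_mult'[symmetric] mult.commute)
  also have "of_nat (Suc n) * ((\<integral>\<^sup>+k. ennreal (F k^2 / norm k) \<partial>lborel) * (\<integral>\<^sup>+y. \<Phi> y * ennreal (norm (y 0)) \<partial>M (Suc n)))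
      = (\<integral>\<^sup>+k. ennreal (F k^2 / norm k) \<partial>lborel) * (of_nat (Suc n) * (\<integral>\<^sup>+y. \<Phi> y * ennreal (norm (y 0)) \<partial>M (Suc n)))"
    by (simp add: mult_ac)
  also have "of_nat (Suc n) * (\<integral>\<^sup>+y. \<Phi> y * ennreal (norm (y 0)) \<partial>M (Suc n)) = (\<integral>\<^sup>+y. \<Phi> y * ennreal (Hf (Suc n) y) \<partial>M (Suc n))"
    by (rule Hsum_int[OF s, symmetric]) simp
  also have "\<dots> = (\<integral>\<^sup>+y. ennreal (Hf (Suc n) y * (cmod (\<psi> (Suc n) y))^2) \<partial>M (Suc n))"
    by (intro nn_integral_cong) (simp add: \<Phi>_def ennreal_mult'[symmetric] Hf_nonneg mult.commute)
  finally show ?thesis .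
qed

lemma gen_sec:
  fixes F :: "real^3 \<Rightarrow> real" and w :: "config \<Rightarrow> real"
  assumes fv: "fock_vec \<psi>" and [measurable]: "F \<in> borel_measurable borel" and Fp: "\<And>k. 0 \<le> F k" and F0: "F 0 = 0"
    and [measurable]: "w \<in> borel_measurable (M n)" and wp: "\<And>x. 0 \<le> w x"
  shows "(\<integral>\<^sup>+x. ennreal (w x * cmod (\<psi> n x)) * (ennreal (sqrt (real n + 1)) * (\<integral>\<^sup>+k. ennreal (F k * cmod (\<psi> (Suc n) (kcons k x n))) \<partial>lborel)) \<partial>M n)
    \<le> ((\<integral>\<^sup>+x. ennreal ((w x)^2 * (cmod (\<psi> n x))^2) \<partial>M n)
        + (\<integral>\<^sup>+k. ennreal (F k^2 / norm k) \<partial>lborel) * (\<integral>\<^sup>+y. ennreal (Hf (Suc n) y * (cmod (\<psi> (Suc n) y))^2) \<partial>M (Suc n))) / 2"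
proof -
  define A where "A x = (\<integral>\<^sup>+k. ennreal (F k * cmod (\<psi> (Suc n) (kcons k x n))) \<partial>lborel)" for x
  have [measurable]: "(\<lambda>x. cmod (\<psi> n x)) \<in> borel_measurable (M n)" "(\<lambda>x. cmod (\<psi> (Suc n) x)) \<in> borel_measurable (M (Suc n))"
    using fv by (auto intro: fock_meas_cmod)
  have [measurable]: "(\<lambda>y. ennreal (F (y 0) * cmod (\<psi> (Suc n) y))) \<in> borel_measurable (M (Suc n))"
  proof -
    have [measurable]: "(\<lambda>x. cmod (\<psi> (Suc n) x)) \<in> borel_measurable (M (Suc n))" using fv by (rule fock_meas_cmod)
    have "(\<lambda>y. y 0) \<in> borel_measurable (M (Suc n))" using meas_comp_y[of 0 "Suc n"] by simp
    then have [measurable]: "(\<lambda>y. F (y 0)) \<in> borel_measurable (M (Suc n))"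
      using measurable_compose[of "\<lambda>y. y 0" "M (Suc n)" borel F borel] by simp
    show ?thesis by measurable
  qed
  have [measurable]: "A \<in> borel_measurable (M n)"
  proof -
    have "(\<lambda>x. \<integral>\<^sup>+k. ennreal (F (kcons k x n 0) * cmod (\<psi> (Suc n) (kcons k x n))) \<partial>lborel) \<in> borel_measurable (M n)"
      by (rule meas_kcons_int) measurable
    then show ?thesis unfolding A_def[abs_def] by simp
  qed
  have "(\<integral>\<^sup>+x. ennreal (w x * cmod (\<psi> n x)) * (ennreal (sqrt (real n + 1)) * A x) \<partial>M n)
     \<le> (\<integral>\<^sup>+x. ((ennreal (w x * cmod (\<psi> n x)))^2 + (ennreal (sqrt (real n + 1)) * A x)^2) / 2 \<partial>M n)"
    by (intro nn_integral_mono amgm_enn)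
  also have "\<dots> = ((\<integral>\<^sup>+x. (ennreal (w x * cmod (\<psi> n x)))^2 \<partial>M n) + (\<integral>\<^sup>+x. (ennreal (sqrt (real n + 1)) * A x)^2 \<partial>M n)) / 2"
  proof -
    have m1: "(\<lambda>x. (ennreal (w x * cmod (\<psi> n x)))^2) \<in> borel_measurable (M n)" by measurable
    have m2: "(\<lambda>x. (ennreal (sqrt (real n + 1)) * A x)^2) \<in> borel_measurable (M n)" by measurable
    have "(\<integral>\<^sup>+x. ((ennreal (w x * cmod (\<psi> n x)))^2 + (ennreal (sqrt (real n + 1)) * A x)^2) / 2 \<partial>M n)
       = (\<integral>\<^sup>+x. ((ennreal (w x * cmod (\<psi> n x)))^2 + (ennreal (sqrt (real n + 1)) * A x)^2) \<partial>M n) / 2"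
      by (rule nn_integral_divide) (use m1 m2 in measurable)
    also have "(\<integral>\<^sup>+x. ((ennreal (w x * cmod (\<psi> n x)))^2 + (ennreal (sqrt (real n + 1)) * A x)^2) \<partial>M n)
       = (\<integral>\<^sup>+x. (ennreal (w x * cmod (\<psi> n x)))^2 \<partial>M n) + (\<integral>\<^sup>+x. (ennreal (sqrt (real n + 1)) * A x)^2 \<partial>M n)"
      by (rule nn_integral_add[OF m1 m2])
    finally show ?thesis .
  qed
  also have "(\<integral>\<^sup>+x. (ennreal (w x * cmod (\<psi> n x)))^2 \<partial>M n) = (\<integral>\<^sup>+x. ennreal ((w x)^2 * (cmod (\<psi> n x))^2) \<partial>M n)"
    using wp by (intro nn_integral_cong) (simp add: ennreal_power power_mult_distrib)
  also have "(\<integral>\<^sup>+x. (ennreal (sqrt (real n + 1)) * A x)^2 \<partial>M n) = of_nat (Suc n) * (\<integral>\<^sup>+x. (A x)^2 \<partial>M n)"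
  proof -
    have "(\<integral>\<^sup>+x. (ennreal (sqrt (real n + 1)) * A x)^2 \<partial>M n) = (\<integral>\<^sup>+x. of_nat (Suc n) * (A x)^2 \<partial>M n)"
    proof (intro nn_integral_cong)
      fix x
      have "(ennreal (sqrt (real n + 1)))^2 = of_nat (Suc n)"
        by (simp add: ennreal_power ennreal_of_nat_eq_real_of_nat)
      then show "(ennreal (sqrt (real n + 1)) * A x)^2 = of_nat (Suc n) * (A x)^2"
        by (simp add: power_mult_distrib)
    qed
    also have "\<dots> = of_nat (Suc n) * (\<integral>\<^sup>+x. (A x)^2 \<partial>M n)"
      by (rule nn_integral_cmult) measurable
    finally show ?thesis .
  qed
  also have "of_nat (Suc n) * (\<integral>\<^sup>+x. (A x)^2 \<partial>M n) \<le> (\<integral>\<^sup>+k. ennreal (F k^2 / norm k) \<partial>lborel) * (\<integral>\<^sup>+y. ennreal (Hf (Suc n) y * (cmod (\<psi> (Suc n) y))^2) \<partial>M (Suc n))"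
    unfolding A_def by (rule aopF[OF fv \<open>F \<in> borel_measurable borel\<close> Fp F0])
  finally show ?thesis unfolding A_def by (simp add: add_mono divide_right_mono_ennreal)
qed


definition CG :: ennreal where "CG = (\<integral>\<^sup>+k. ennreal (Gb k^2 / norm k) \<partial>lborel)"

definition Nsec :: "fock \<Rightarrow> nat \<Rightarrow> ennreal" where
  "Nsec \<psi> n = (\<integral>\<^sup>+x. ennreal ((cmod (\<psi> n x))^2) \<partial>M n)"

lemma meas_fB[measurable]: "(\<lambda>k. cmod (fB g kappa s j k)) \<in> borel_measurable borel"
  unfolding fB_def[abs_def] betaG_def[abs_def] rho_def[abs_def] by measurable

lemma meas_fPhi[measurable]: "(\<lambda>k. cmod (fPhi tau Lam k)) \<in> borel_measurable borel"
  unfolding fPhi_def[abs_def] rho_def[abs_def] by measurable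

lemma meas_vec_nth[measurable]: "(\<lambda>v::real^3. v $ j) \<in> borel_measurable borel"
  by (intro borel_measurable_continuous_onI continuous_on_component continuous_on_id)

lemma meas_PPfj[measurable]: "(\<lambda>x. \<bar>(P - Pf n x) $ j\<bar>) \<in> borel_measurable (M n)"
proof -
  have "(\<lambda>x. P - Pf n x) \<in> borel_measurable (M n)" by measurable
  from measurable_compose[OF this meas_vec_nth[of j]] show ?thesis by measurable
qed

lemma T3_sec:
  assumes fv: "fock_vec \<psi>" and kap: "1 < kappa"
  shows "ennreal (cmod (\<integral>x. cnj (\<psi> n x) * mulPPf P j (ann (fB g kappa s j) \<psi>) n x \<partial>M n))
    \<le> (ennreal \<bar>g\<bar> * (2 * Hsec P \<psi> n) + ennreal \<bar>g\<bar> * CG * Hsec P \<psi> (Suc n)) / 2"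
proof -
  let ?f = "fB g kappa s j"
  define w where "w x = sqrt \<bar>g\<bar> * \<bar>(P - Pf n x) $ j\<bar>" for x
  define F where "F k = sqrt \<bar>g\<bar> * Gb k" for k
  have mw[measurable]: "w \<in> borel_measurable (M n)" unfolding w_def[abs_def] by measurable
  have mF[measurable]: "F \<in> borel_measurable borel" unfolding F_def[abs_def] by measurable
  have [measurable]: "(\<lambda>x. cmod (\<psi> (Suc n) x)) \<in> borel_measurable (M (Suc n))" using fv by (rule fock_meas_cmod)
  have Fp: "\<And>k. 0 \<le> F k" by (simp add: F_def Gb_nonneg)
  have F0: "F 0 = 0" by (simp add: F_def Gb_def)
  have wp: "\<And>x. 0 \<le> w x" by (simp add: w_def)
  have "ennreal (cmod (\<integral>x. cnj (\<psi> n x) * mulPPf P j (ann ?f \<psi>) n x \<partial>M n))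
      \<le> (\<integral>\<^sup>+x. ennreal (cmod (\<psi> n x)) * ennreal (cmod (mulPPf P j (ann ?f \<psi>) n x)) \<partial>M n)"
    by (rule sector_le)
  also have "\<dots> \<le> (\<integral>\<^sup>+x. ennreal (w x * cmod (\<psi> n x)) * (ennreal (sqrt (real n + 1)) * (\<integral>\<^sup>+k. ennreal (F k * cmod (\<psi> (Suc n) (kcons k x n))) \<partial>lborel)) \<partial>M n)"
  proof (intro nn_integral_mono)
    fix x
    have mk: "(\<lambda>k. ennreal (F k * cmod (\<psi> (Suc n) (kcons k x n)))) \<in> borel_measurable lborel"
    proof -
      have [measurable]: "(\<lambda>y. cmod (\<psi> (Suc n) y)) \<in> borel_measurable (M (Suc n))" using fv by (rule fock_meas_cmod)
      have "(\<lambda>k. cmod (\<psi> (Suc n) (kcons k x n))) \<in> borel_measurable lborel"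
        by (rule meas_kcons_k') measurable
      then show ?thesis by measurable
    qed
    have "ennreal (cmod (ann ?f \<psi> n x)) \<le> ennreal (sqrt (real n + 1)) * (\<integral>\<^sup>+k. ennreal (cmod (?f k) * cmod (\<psi> (Suc n) (kcons k x n))) \<partial>lborel)"
      by (rule ann_le)
    also have "\<dots> \<le> ennreal (sqrt (real n + 1)) * (\<integral>\<^sup>+k. ennreal (sqrt \<bar>g\<bar>) * ennreal (F k * cmod (\<psi> (Suc n) (kcons k x n))) \<partial>lborel)"
    proof (intro mult_left_mono nn_integral_mono)
      fix k
      have "cmod (?f k) * cmod (\<psi> (Suc n) (kcons k x n)) \<le> \<bar>g\<bar> * Gb k * cmod (\<psi> (Suc n) (kcons k x n))"
        by (intro mult_right_mono fB_bound[OF kap]) auto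
      also have "\<dots> = sqrt \<bar>g\<bar> * (F k * cmod (\<psi> (Suc n) (kcons k x n)))"
        by (simp add: F_def mult_ac real_sqrt_mult[symmetric])
      finally show "ennreal (cmod (?f k) * cmod (\<psi> (Suc n) (kcons k x n))) \<le> ennreal (sqrt \<bar>g\<bar>) * ennreal (F k * cmod (\<psi> (Suc n) (kcons k x n)))"
        by (simp add: ennreal_mult'[symmetric] ennreal_leI)
    qed simp
    also have "\<dots> = ennreal (sqrt (real n + 1)) * (ennreal (sqrt \<bar>g\<bar>) * (\<integral>\<^sup>+k. ennreal (F k * cmod (\<psi> (Suc n) (kcons k x n))) \<partial>lborel))"
      using mk by (simp add: nn_integral_cmult)
    finally have b: "ennreal (cmod (ann ?f \<psi> n x)) \<le> ennreal (sqrt (real n + 1)) * (ennreal (sqrt \<bar>g\<bar>) * (\<integral>\<^sup>+k. ennreal (F k * cmod (\<psi> (Suc n) (kcons k x n))) \<partial>lborel))" .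
    have "ennreal (cmod (\<psi> n x)) * ennreal (cmod (mulPPf P j (ann ?f \<psi>) n x))
        = ennreal (cmod (\<psi> n x) * \<bar>(P - Pf n x) $ j\<bar>) * ennreal (cmod (ann ?f \<psi> n x))"
    proof -
      have "cmod (mulPPf P j (ann ?f \<psi>) n x) = \<bar>(P - Pf n x) $ j\<bar> * cmod (ann ?f \<psi> n x)"
        by (simp only: mulPPf_def norm_mult norm_of_real)
      then show ?thesis by (simp add: ennreal_mult mult.assoc)
    qed
    also have "\<dots> \<le> ennreal (cmod (\<psi> n x) * \<bar>(P - Pf n x) $ j\<bar>) * (ennreal (sqrt (real n + 1)) * (ennreal (sqrt \<bar>g\<bar>) * (\<integral>\<^sup>+k. ennreal (F k * cmod (\<psi> (Suc n) (kcons k x n))) \<partial>lborel)))"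
      by (intro mult_left_mono b) simp
    also have "\<dots> = ennreal (w x * cmod (\<psi> n x)) * (ennreal (sqrt (real n + 1)) * (\<integral>\<^sup>+k. ennreal (F k * cmod (\<psi> (Suc n) (kcons k x n))) \<partial>lborel))"
      by (simp add: w_def ennreal_mult mult_ac)
    finally show "ennreal (cmod (\<psi> n x)) * ennreal (cmod (mulPPf P j (ann ?f \<psi>) n x))
      \<le> ennreal (w x * cmod (\<psi> n x)) * (ennreal (sqrt (real n + 1)) * (\<integral>\<^sup>+k. ennreal (F k * cmod (\<psi> (Suc n) (kcons k x n))) \<partial>lborel))" .
  qed
  also have "\<dots> \<le> ((\<integral>\<^sup>+x. ennreal ((w x)^2 * (cmod (\<psi> n x))^2) \<partial>M n)
        + (\<integral>\<^sup>+k. ennreal (F k^2 / norm k) \<partial>lborel) * (\<integral>\<^sup>+y. ennreal (Hf (Suc n) y * (cmod (\<psi> (Suc n) y))^2) \<partial>M (Suc n))) / 2"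
    by (rule gen_sec[OF fv mF Fp F0 mw wp])
  also have "\<dots> \<le> (ennreal \<bar>g\<bar> * (2 * Hsec P \<psi> n) + ennreal \<bar>g\<bar> * CG * Hsec P \<psi> (Suc n)) / 2"
  proof (intro divide_right_mono_ennreal add_mono)
    have "(\<integral>\<^sup>+x. ennreal ((w x)^2 * (cmod (\<psi> n x))^2) \<partial>M n) \<le> (\<integral>\<^sup>+x. ennreal \<bar>g\<bar> * ennreal ((norm (P - Pf n x))^2 * (cmod (\<psi> n x))^2) \<partial>M n)"
    proof (intro nn_integral_mono)
      fix x
      have "\<bar>(P - Pf n x) $ j\<bar> \<le> norm (P - Pf n x)" by (rule component_le_norm_cart)
      then have "((P - Pf n x) $ j)^2 \<le> (norm (P - Pf n x))^2"
        by (metis abs_ge_zero power2_abs power_mono)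
      then have "(w x)^2 * (cmod (\<psi> n x))^2 \<le> \<bar>g\<bar> * ((norm (P - Pf n x))^2 * (cmod (\<psi> n x))^2)"
        by (simp add: w_def power_mult_distrib mult_left_mono mult_right_mono mult.assoc[symmetric])
      then show "ennreal ((w x)^2 * (cmod (\<psi> n x))^2) \<le> ennreal \<bar>g\<bar> * ennreal ((norm (P - Pf n x))^2 * (cmod (\<psi> n x))^2)"
        by (simp add: ennreal_mult'[symmetric] ennreal_leI)
    qed
    also have "\<dots> = ennreal \<bar>g\<bar> * (\<integral>\<^sup>+x. ennreal ((norm (P - Pf n x))^2 * (cmod (\<psi> n x))^2) \<partial>M n)"
      using fv by (intro nn_integral_cmult) measurable
    also have "\<dots> \<le> ennreal \<bar>g\<bar> * (2 * Hsec P \<psi> n)"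
      by (intro mult_left_mono Kn_le[OF fv]) simp
    finally show "(\<integral>\<^sup>+x. ennreal ((w x)^2 * (cmod (\<psi> n x))^2) \<partial>M n) \<le> ennreal \<bar>g\<bar> * (2 * Hsec P \<psi> n)" .
    have "(\<integral>\<^sup>+k. ennreal (F k^2 / norm k) \<partial>lborel) = ennreal \<bar>g\<bar> * CG"
    proof -
      have "(\<integral>\<^sup>+k. ennreal (F k^2 / norm k) \<partial>lborel) = (\<integral>\<^sup>+k. ennreal \<bar>g\<bar> * ennreal (Gb k^2 / norm k) \<partial>lborel)"
        by (intro nn_integral_cong) (simp add: F_def power_mult_distrib ennreal_mult'[symmetric])
      also have "\<dots> = ennreal \<bar>g\<bar> * CG" unfolding CG_def by (rule nn_integral_cmult) measurable
      finally show ?thesis .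
    qed
    then show "(\<integral>\<^sup>+k. ennreal (F k^2 / norm k) \<partial>lborel) * (\<integral>\<^sup>+y. ennreal (Hf (Suc n) y * (cmod (\<psi> (Suc n) y))^2) \<partial>M (Suc n))
        \<le> ennreal \<bar>g\<bar> * CG * Hsec P \<psi> (Suc n)"
      by (simp add: mult_left_mono Hn_le)
  qed
  finally show ?thesis .
qed


lemma T4_sec:
  assumes fv: "fock_vec \<psi>" and tau: "0 < tau"
  shows "ennreal (cmod (\<integral>x. cnj (\<psi> n x) * ann (fPhi tau Lam) \<psi> n x \<partial>M n))
    \<le> (Nsec \<psi> n + (\<integral>\<^sup>+k. ennreal ((cmod (fPhi tau Lam k))^2 / norm k) \<partial>lborel) * Hsec P \<psi> (Suc n)) / 2"
proof -
  define F where "F k = cmod (fPhi tau Lam k)" for k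
  have mF[measurable]: "F \<in> borel_measurable borel" unfolding F_def[abs_def] by measurable
  have Fp: "\<And>k. 0 \<le> F k" by (simp add: F_def)
  have F0: "F 0 = 0" using tau by (simp add: F_def fPhi_def)
  have mw: "(\<lambda>x::config. 1::real) \<in> borel_measurable (M n)" by simp
  have wp: "\<And>x::config. 0 \<le> (1::real)" by simp
  have "ennreal (cmod (\<integral>x. cnj (\<psi> n x) * ann (fPhi tau Lam) \<psi> n x \<partial>M n))
      \<le> (\<integral>\<^sup>+x. ennreal (cmod (\<psi> n x)) * ennreal (cmod (ann (fPhi tau Lam) \<psi> n x)) \<partial>M n)"
    by (rule sector_le)
  also have "\<dots> \<le> (\<integral>\<^sup>+x. ennreal (1 * cmod (\<psi> n x)) * (ennreal (sqrt (real n + 1)) * (\<integral>\<^sup>+k. ennreal (F k * cmod (\<psi> (Suc n) (kcons k x n))) \<partial>lborel)) \<partial>M n)"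
    by (intro nn_integral_mono) (simp add: F_def mult_left_mono[OF ann_le] del: norm_mult)
  also have "\<dots> \<le> ((\<integral>\<^sup>+x. ennreal (1^2 * (cmod (\<psi> n x))^2) \<partial>M n)
        + (\<integral>\<^sup>+k. ennreal (F k^2 / norm k) \<partial>lborel) * (\<integral>\<^sup>+y. ennreal (Hf (Suc n) y * (cmod (\<psi> (Suc n) y))^2) \<partial>M (Suc n))) / 2"
    by (rule gen_sec[OF fv mF Fp F0 mw]) simp
  also have "\<dots> \<le> (Nsec \<psi> n + (\<integral>\<^sup>+k. ennreal ((cmod (fPhi tau Lam k))^2 / norm k) \<partial>lborel) * Hsec P \<psi> (Suc n)) / 2"
  proof (intro divide_right_mono_ennreal add_mono)
    show "(\<integral>\<^sup>+x. ennreal (1^2 * (cmod (\<psi> n x))^2) \<partial>M n) \<le> Nsec \<psi> n" by (simp add: Nsec_def)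
    have "(\<integral>\<^sup>+y. ennreal (Hf (Suc n) y * (cmod (\<psi> (Suc n) y))^2) \<partial>M (Suc n)) \<le> Hsec P \<psi> (Suc n)" by (rule Hn_le)
    then show "(\<integral>\<^sup>+k. ennreal (F k^2 / norm k) \<partial>lborel) * (\<integral>\<^sup>+y. ennreal (Hf (Suc n) y * (cmod (\<psi> (Suc n) y))^2) \<partial>M (Suc n))
      \<le> (\<integral>\<^sup>+k. ennreal ((cmod (fPhi tau Lam k))^2 / norm k) \<partial>lborel) * Hsec P \<psi> (Suc n)"
      unfolding F_def by (rule mult_left_mono) simp
  qed
  finally show ?thesis .
qed

lemma T2_nonneg:
  assumes fv: "fock_vec \<psi>" and kap: "1 < kappa" and H0: "H0_form P \<psi> < \<infinity>"
  shows "0 \<le> fock_normsq (ann (fB g kappa s j) \<psi>)"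
proof -
  let ?f = "fB g kappa s j"
  define t where "t n = (\<integral>x. (cmod (ann ?f \<psi> n x))\<^sup>2 \<partial>M n)" for n
  define F where "F k = \<bar>g\<bar> * Gb k" for k
  have mF[measurable]: "F \<in> borel_measurable borel" unfolding F_def[abs_def] by measurable
  have Fp: "\<And>k. 0 \<le> F k" by (simp add: F_def Gb_nonneg)
  have F0: "F 0 = 0" by (simp add: F_def Gb_def)
  have tp: "0 \<le> t n" for n unfolding t_def by (rule integral_nonneg_AE) auto
  have tle: "ennreal (t n) \<le> (\<integral>\<^sup>+k. ennreal (F k^2 / norm k) \<partial>lborel) * Hsec P \<psi> (Suc n)" for n
  proof -
    have "ennreal (t n) \<le> (\<integral>\<^sup>+x. ennreal ((cmod (ann ?f \<psi> n x))\<^sup>2) \<partial>M n)"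
    proof (cases "integrable (M n) (\<lambda>x. (cmod (ann ?f \<psi> n x))\<^sup>2)")
      case True then show ?thesis unfolding t_def by (simp add: nn_integral_eq_integral)
    next
      case False then show ?thesis unfolding t_def by (simp add: not_integrable_integral_eq)
    qed
    also have "\<dots> \<le> (\<integral>\<^sup>+x. (ennreal (sqrt (real n + 1)) * (\<integral>\<^sup>+k. ennreal (F k * cmod (\<psi> (Suc n) (kcons k x n))) \<partial>lborel))^2 \<partial>M n)"
    proof (intro nn_integral_mono)
      fix x
      have "ennreal (cmod (ann ?f \<psi> n x)) \<le> ennreal (sqrt (real n + 1)) * (\<integral>\<^sup>+k. ennreal (cmod (?f k) * cmod (\<psi> (Suc n) (kcons k x n))) \<partial>lborel)"
        by (rule ann_le)
      also have "\<dots> \<le> ennreal (sqrt (real n + 1)) * (\<integral>\<^sup>+k. ennreal (F k * cmod (\<psi> (Suc n) (kcons k x n))) \<partial>lborel)"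
        by (intro mult_left_mono nn_integral_mono ennreal_leI mult_right_mono) (auto simp: F_def fB_bound[OF kap])
      finally have "(ennreal (cmod (ann ?f \<psi> n x)))^2 \<le> (ennreal (sqrt (real n + 1)) * (\<integral>\<^sup>+k. ennreal (F k * cmod (\<psi> (Suc n) (kcons k x n))) \<partial>lborel))^2"
        by (rule power_mono) simp
      then show "ennreal ((cmod (ann ?f \<psi> n x))\<^sup>2) \<le> (ennreal (sqrt (real n + 1)) * (\<integral>\<^sup>+k. ennreal (F k * cmod (\<psi> (Suc n) (kcons k x n))) \<partial>lborel))^2"
        by (simp add: ennreal_power)
    qed
    also have "\<dots> = of_nat (Suc n) * (\<integral>\<^sup>+x. (\<integral>\<^sup>+k. ennreal (F k * cmod (\<psi> (Suc n) (kcons k x n))) \<partial>lborel)^2 \<partial>M n)"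
    proof -
      have [measurable]: "(\<lambda>y. cmod (\<psi> (Suc n) y)) \<in> borel_measurable (M (Suc n))" using fv by (rule fock_meas_cmod)
      have [measurable]: "(\<lambda>y. ennreal (F (y 0) * cmod (\<psi> (Suc n) y))) \<in> borel_measurable (M (Suc n))"
      proof -
        have "(\<lambda>y. y 0) \<in> borel_measurable (M (Suc n))" using meas_comp_y[of 0 "Suc n"] by simp
        then have [measurable]: "(\<lambda>y. F (y 0)) \<in> borel_measurable (M (Suc n))"
          using measurable_compose[of "\<lambda>y. y 0" "M (Suc n)" borel F borel] by simp
        show ?thesis by measurable
      qed
      have mA: "(\<lambda>x. \<integral>\<^sup>+k. ennreal (F k * cmod (\<psi> (Suc n) (kcons k x n))) \<partial>lborel) \<in> borel_measurable (M n)"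
      proof -
        have "(\<lambda>x. \<integral>\<^sup>+k. ennreal (F (kcons k x n 0) * cmod (\<psi> (Suc n) (kcons k x n))) \<partial>lborel) \<in> borel_measurable (M n)"
          by (rule meas_kcons_int) measurable
        then show ?thesis by simp
      qed
      have "(ennreal (sqrt (real n + 1)))^2 = of_nat (Suc n)"
        by (simp add: ennreal_power ennreal_of_nat_eq_real_of_nat)
      then have "(\<integral>\<^sup>+x. (ennreal (sqrt (real n + 1)) * (\<integral>\<^sup>+k. ennreal (F k * cmod (\<psi> (Suc n) (kcons k x n))) \<partial>lborel))^2 \<partial>M n)
         = (\<integral>\<^sup>+x. of_nat (Suc n) * (\<integral>\<^sup>+k. ennreal (F k * cmod (\<psi> (Suc n) (kcons k x n))) \<partial>lborel)^2 \<partial>M n)"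
        by (simp add: power_mult_distrib)
      also have "\<dots> = of_nat (Suc n) * (\<integral>\<^sup>+x. (\<integral>\<^sup>+k. ennreal (F k * cmod (\<psi> (Suc n) (kcons k x n))) \<partial>lborel)^2 \<partial>M n)"
        using mA by (intro nn_integral_cmult) measurable
      finally show ?thesis .
    qed
    also have "\<dots> \<le> (\<integral>\<^sup>+k. ennreal (F k^2 / norm k) \<partial>lborel) * (\<integral>\<^sup>+y. ennreal (Hf (Suc n) y * (cmod (\<psi> (Suc n) y))^2) \<partial>M (Suc n))"
      by (rule aopF[OF fv mF Fp F0])
    also have "\<dots> \<le> (\<integral>\<^sup>+k. ennreal (F k^2 / norm k) \<partial>lborel) * Hsec P \<psi> (Suc n)"
      by (intro mult_left_mono Hn_le) simp
    finally show ?thesis .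
  qed
  have CF: "(\<integral>\<^sup>+k. ennreal (F k^2 / norm k) \<partial>lborel) < \<infinity>"
  proof -
    have "(\<integral>\<^sup>+k. ennreal (F k^2 / norm k) \<partial>lborel) = (\<integral>\<^sup>+k. ennreal (g^2) * ennreal (Gb k^2 / norm k) \<partial>lborel)"
      by (intro nn_integral_cong) (simp add: F_def power_mult_distrib ennreal_mult'[symmetric])
    also have "\<dots> = ennreal (g^2) * CG" unfolding CG_def by (rule nn_integral_cmult) measurable
    also have "\<dots> < \<infinity>" using CG_fin by (simp add: CG_def ennreal_mult_less_top)
    finally show ?thesis .
  qed
  have "(\<Sum>n. ennreal (t n)) \<le> (\<Sum>n. (\<integral>\<^sup>+k. ennreal (F k^2 / norm k) \<partial>lborel) * Hsec P \<psi> (Suc n))"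
    by (intro suminf_le tle) auto
  also have "\<dots> = (\<integral>\<^sup>+k. ennreal (F k^2 / norm k) \<partial>lborel) * (\<Sum>n. Hsec P \<psi> (Suc n))"
    by simp
  also have "(\<Sum>n. Hsec P \<psi> (Suc n)) \<le> H0_form P \<psi>"
  proof -
    have "(\<Sum>n. Hsec P \<psi> n) = (\<Sum>n. Hsec P \<psi> (n + 1)) + (\<Sum>n<1. Hsec P \<psi> n)"
      by (rule suminf_offset) simp
    then show ?thesis by (simp add: H0_eq)
  qed
  then have "(\<integral>\<^sup>+k. ennreal (F k^2 / norm k) \<partial>lborel) * (\<Sum>n. Hsec P \<psi> (Suc n)) \<le> (\<integral>\<^sup>+k. ennreal (F k^2 / norm k) \<partial>lborel) * H0_form P \<psi>"
    by (rule mult_left_mono) simp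
  finally have "(\<Sum>n. ennreal (t n)) \<le> (\<integral>\<^sup>+k. ennreal (F k^2 / norm k) \<partial>lborel) * H0_form P \<psi>" .
  moreover have "(\<integral>\<^sup>+k. ennreal (F k^2 / norm k) \<partial>lborel) * H0_form P \<psi> < \<infinity>"
    using CF H0 by (simp add: ennreal_mult_less_top)
  ultimately have "(\<Sum>n. ennreal (t n)) \<noteq> top" by (auto simp: top_unique)
  then have "summable t" using tp by (intro summable_suminf_not_top) auto
  then have "0 \<le> suminf t" using tp by (intro suminf_nonneg)
  then show ?thesis by (simp add: fock_normsq_def t_def[abs_def])
qed


definition DG :: ennreal where
  "DG = (\<integral>\<^sup>+k. (\<integral>\<^sup>+k'. ennreal (Gb k^2 * Gb k'^2 / (norm k + norm k')) \<partial>lborel) \<partial>lborel)"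

lemma T1_sec:
  assumes fv: "fock_vec \<psi>" and kap: "1 < kappa"
  shows "ennreal (cmod (\<integral>x. cnj (\<psi> n x) * ann (fB g kappa s j) (ann (fB g kappa s j) \<psi>) n x \<partial>M n))
    \<le> ennreal (g^2) * (DG * (Hsec P \<psi> n + 2 * Nsec \<psi> n) / 2 + Hsec P \<psi> (Suc (Suc n)))"
proof -
  let ?f = "fB g kappa s j"
  let ?c = "(real n + 1) * (real n + 2)"
  define \<phi>a where "\<phi>a x = \<bar>g\<bar> * cmod (\<psi> n x)" for x
  define \<phi>b where "\<phi>b y = \<bar>g\<bar> * cmod (\<psi> (Suc (Suc n)) y)" for y
  have [measurable]: "(\<lambda>x. cmod (\<psi> n x)) \<in> borel_measurable (M n)" using fv by (rule fock_meas_cmod)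
  have [measurable]: "(\<lambda>x. cmod (\<psi> (Suc (Suc n)) x)) \<in> borel_measurable (M (Suc (Suc n)))" using fv by (rule fock_meas_cmod)
  have ma[measurable]: "\<phi>a \<in> borel_measurable (M n)" unfolding \<phi>a_def[abs_def] by measurable
  have mb[measurable]: "\<phi>b \<in> borel_measurable (M (Suc (Suc n)))" unfolding \<phi>b_def[abs_def] by measurable
  have sb: "symf (Suc (Suc n)) \<phi>b" using fock_sym[OF fv, of "Suc (Suc n)"] by (simp add: symf_def \<phi>b_def)
  define Z where "Z z = (\<integral>\<^sup>+k'. ennreal (Gb k' * cmod (\<psi> (Suc (Suc n)) (kcons k' z (Suc n)))) \<partial>lborel)" for z
  have mZ[measurable]: "Z \<in> borel_measurable (M (Suc n))"
  proof -
    have "(\<lambda>y. y 0) \<in> borel_measurable (M (Suc (Suc n)))" using meas_comp_y[of 0 "Suc (Suc n)"] by simp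
    then have [measurable]: "(\<lambda>y. Gb (y 0)) \<in> borel_measurable (M (Suc (Suc n)))"
      using measurable_compose[of "\<lambda>y. y 0" "M (Suc (Suc n))" borel Gb borel] by simp
    have "(\<lambda>z. \<integral>\<^sup>+k'. ennreal (Gb (kcons k' z (Suc n) 0) * cmod (\<psi> (Suc (Suc n)) (kcons k' z (Suc n)))) \<partial>lborel) \<in> borel_measurable (M (Suc n))"
      by (rule meas_kcons_int) measurable
    then show ?thesis unfolding Z_def[abs_def] by simp
  qed
  have mk': "(\<lambda>k'. ennreal (Gb k' * cmod (\<psi> (Suc (Suc n)) (kcons k' z (Suc n))))) \<in> borel_measurable lborel" for z
  proof -
    have "(\<lambda>k'. cmod (\<psi> (Suc (Suc n)) (kcons k' z (Suc n)))) \<in> borel_measurable lborel"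
      by (rule meas_kcons_k') measurable
    then show ?thesis by measurable
  qed
  have "ennreal (cmod (\<integral>x. cnj (\<psi> n x) * ann ?f (ann ?f \<psi>) n x \<partial>M n))
      \<le> (\<integral>\<^sup>+x. ennreal (cmod (\<psi> n x)) * ennreal (cmod (ann ?f (ann ?f \<psi>) n x)) \<partial>M n)"
    by (rule sector_le)
  also have "\<dots> \<le> (\<integral>\<^sup>+x. (\<integral>\<^sup>+k. (\<integral>\<^sup>+k'. ennreal (sqrt ?c * \<phi>a x * (Gb k * Gb k') * \<phi>b (kcons k' (kcons k x n) (Suc n))) \<partial>lborel) \<partial>lborel) \<partial>M n)"
  proof (intro nn_integral_mono)
    fix x
    have inner: "ennreal (cmod (?f k) * cmod (ann ?f \<psi> (Suc n) (kcons k x n)))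
        \<le> ennreal (\<bar>g\<bar> * Gb k) * (ennreal (sqrt (real n + 2)) * (ennreal \<bar>g\<bar> * Z (kcons k x n)))" for k
    proof -
      let ?z = "kcons k x n"
      have "ennreal (cmod (ann ?f \<psi> (Suc n) ?z)) \<le> ennreal (sqrt (real (Suc n) + 1)) * (\<integral>\<^sup>+k'. ennreal (cmod (?f k') * cmod (\<psi> (Suc (Suc n)) (kcons k' ?z (Suc n)))) \<partial>lborel)"
        by (rule ann_le)
      also have "\<dots> \<le> ennreal (sqrt (real n + 2)) * (\<integral>\<^sup>+k'. ennreal \<bar>g\<bar> * ennreal (Gb k' * cmod (\<psi> (Suc (Suc n)) (kcons k' ?z (Suc n)))) \<partial>lborel)"
      proof -
        have e: "real (Suc n) + 1 = real n + 2" by simp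
        show ?thesis unfolding e
        proof (intro mult_left_mono nn_integral_mono)
          fix k'
          have "cmod (?f k') * cmod (\<psi> (Suc (Suc n)) (kcons k' ?z (Suc n))) \<le> \<bar>g\<bar> * Gb k' * cmod (\<psi> (Suc (Suc n)) (kcons k' ?z (Suc n)))"
            by (intro mult_right_mono fB_bound[OF kap]) auto
          then show "ennreal (cmod (?f k') * cmod (\<psi> (Suc (Suc n)) (kcons k' ?z (Suc n)))) \<le> ennreal \<bar>g\<bar> * ennreal (Gb k' * cmod (\<psi> (Suc (Suc n)) (kcons k' ?z (Suc n))))"
            by (simp add: ennreal_mult'[symmetric] ennreal_leI mult.assoc)
        qed simp
      qed
      also have "\<dots> = ennreal (sqrt (real n + 2)) * (ennreal \<bar>g\<bar> * Z ?z)"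
        unfolding Z_def using mk'[of ?z] by (simp add: nn_integral_cmult)
      finally have b: "ennreal (cmod (ann ?f \<psi> (Suc n) ?z)) \<le> ennreal (sqrt (real n + 2)) * (ennreal \<bar>g\<bar> * Z ?z)" .
      have "ennreal (cmod (?f k) * cmod (ann ?f \<psi> (Suc n) ?z)) = ennreal (cmod (?f k)) * ennreal (cmod (ann ?f \<psi> (Suc n) ?z))"
        by (simp add: ennreal_mult)
      also have "\<dots> \<le> ennreal (\<bar>g\<bar> * Gb k) * (ennreal (sqrt (real n + 2)) * (ennreal \<bar>g\<bar> * Z ?z))"
        by (intro mult_mono ennreal_leI fB_bound[OF kap] b) auto
      finally show ?thesis .
    qed
    have mkk: "(\<lambda>k. ennreal (\<bar>g\<bar> * Gb k) * (ennreal (sqrt (real n + 2)) * (ennreal \<bar>g\<bar> * Z (kcons k x n)))) \<in> borel_measurable lborel"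
    proof -
      have "(\<lambda>k. Z (kcons k x n)) \<in> borel_measurable lborel" by (rule meas_kcons_k') (rule mZ)
      then show ?thesis by measurable
    qed
    have "ennreal (cmod (\<psi> n x)) * ennreal (cmod (ann ?f (ann ?f \<psi>) n x))
       \<le> ennreal (cmod (\<psi> n x)) * (ennreal (sqrt (real n + 1)) * (\<integral>\<^sup>+k. ennreal (cmod (?f k) * cmod (ann ?f \<psi> (Suc n) (kcons k x n))) \<partial>lborel))"
      by (intro mult_left_mono ann_le) simp
    also have "\<dots> \<le> ennreal (cmod (\<psi> n x)) * (ennreal (sqrt (real n + 1)) * (\<integral>\<^sup>+k. ennreal (\<bar>g\<bar> * Gb k) * (ennreal (sqrt (real n + 2)) * (ennreal \<bar>g\<bar> * Z (kcons k x n))) \<partial>lborel))"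
      by (intro mult_left_mono nn_integral_mono inner) auto
    also have "\<dots> = (ennreal (cmod (\<psi> n x)) * ennreal (sqrt (real n + 1))) * (\<integral>\<^sup>+k. ennreal (\<bar>g\<bar> * Gb k) * (ennreal (sqrt (real n + 2)) * (ennreal \<bar>g\<bar> * Z (kcons k x n))) \<partial>lborel)"
      by (simp only: mult.assoc)
    also have "\<dots> = (\<integral>\<^sup>+k. ennreal (cmod (\<psi> n x)) * ennreal (sqrt (real n + 1)) * (ennreal (\<bar>g\<bar> * Gb k) * (ennreal (sqrt (real n + 2)) * (ennreal \<bar>g\<bar> * Z (kcons k x n)))) \<partial>lborel)"
      by (rule nn_integral_cmult[OF mkk, symmetric])
    also have "\<dots> = (\<integral>\<^sup>+k. (\<integral>\<^sup>+k'. ennreal (sqrt ?c * \<phi>a x * (Gb k * Gb k') * \<phi>b (kcons k' (kcons k x n) (Suc n))) \<partial>lborel) \<partial>lborel)"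
    proof (intro nn_integral_cong)
      fix k
      define C where "C = ennreal (cmod (\<psi> n x)) * ennreal (sqrt (real n + 1)) * (ennreal (\<bar>g\<bar> * Gb k) * (ennreal (sqrt (real n + 2)) * ennreal \<bar>g\<bar>))"
      have "ennreal (cmod (\<psi> n x)) * ennreal (sqrt (real n + 1)) * (ennreal (\<bar>g\<bar> * Gb k) * (ennreal (sqrt (real n + 2)) * (ennreal \<bar>g\<bar> * Z (kcons k x n))))
          = C * Z (kcons k x n)" by (simp add: C_def mult_ac)
      also have "\<dots> = (\<integral>\<^sup>+k'. C * ennreal (Gb k' * cmod (\<psi> (Suc (Suc n)) (kcons k' (kcons k x n) (Suc n)))) \<partial>lborel)"
        unfolding Z_def using mk' by (simp add: nn_integral_cmult)
      also have "\<dots> = (\<integral>\<^sup>+k'. ennreal (sqrt ?c * \<phi>a x * (Gb k * Gb k') * \<phi>b (kcons k' (kcons k x n) (Suc n))) \<partial>lborel)"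
      proof (intro nn_integral_cong)
        fix k'
        have sq: "sqrt ?c = sqrt (real n + 1) * sqrt (real n + 2)" by (simp add: real_sqrt_mult)
        show "C * ennreal (Gb k' * cmod (\<psi> (Suc (Suc n)) (kcons k' (kcons k x n) (Suc n)))) = ennreal (sqrt ?c * \<phi>a x * (Gb k * Gb k') * \<phi>b (kcons k' (kcons k x n) (Suc n)))"
          unfolding C_def \<phi>a_def \<phi>b_def sq
          by (simp add: ennreal_mult[symmetric] Gb_nonneg mult_ac)
      qed
      finally show "ennreal (cmod (\<psi> n x)) * ennreal (sqrt (real n + 1)) * (ennreal (\<bar>g\<bar> * Gb k) * (ennreal (sqrt (real n + 2)) * (ennreal \<bar>g\<bar> * Z (kcons k x n))))
          = (\<integral>\<^sup>+k'. ennreal (sqrt ?c * \<phi>a x * (Gb k * Gb k') * \<phi>b (kcons k' (kcons k x n) (Suc n))) \<partial>lborel)" .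
    qed
    finally show "ennreal (cmod (\<psi> n x)) * ennreal (cmod (ann ?f (ann ?f \<psi>) n x))
       \<le> (\<integral>\<^sup>+k. (\<integral>\<^sup>+k'. ennreal (sqrt ?c * \<phi>a x * (Gb k * Gb k') * \<phi>b (kcons k' (kcons k x n) (Suc n))) \<partial>lborel) \<partial>lborel)" .
  qed
  also have "\<dots> \<le> DG * (\<integral>\<^sup>+x. ennreal ((Mh n x + 2) * \<phi>a x^2) \<partial>M n) / 2
       + (\<integral>\<^sup>+y. ennreal (Hf (Suc (Suc n)) y * \<phi>b y^2) \<partial>M (Suc (Suc n)))"
    unfolding DG_def
    by (rule bb_core[OF meas_Gb Gb_nonneg Gb_hard ma _ mb _ sb]) (simp_all add: \<phi>a_def \<phi>b_def)
  also have "\<dots> \<le> ennreal (g^2) * (DG * (Hsec P \<psi> n + 2 * Nsec \<psi> n) / 2 + Hsec P \<psi> (Suc (Suc n)))"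
  proof -
    have A: "(\<integral>\<^sup>+x. ennreal ((Mh n x + 2) * \<phi>a x^2) \<partial>M n) \<le> ennreal (g^2) * (Hsec P \<psi> n + 2 * Nsec \<psi> n)"
    proof -
      have "(\<integral>\<^sup>+x. ennreal ((Mh n x + 2) * \<phi>a x^2) \<partial>M n)
          \<le> (\<integral>\<^sup>+x. ennreal (g^2) * (ennreal (Hf n x * (cmod (\<psi> n x))^2) + 2 * ennreal ((cmod (\<psi> n x))^2)) \<partial>M n)"
      proof (intro nn_integral_mono)
        fix x
        have "(Mh n x + 2) * \<phi>a x^2 \<le> g^2 * (Hf n x * (cmod (\<psi> n x))^2 + 2 * (cmod (\<psi> n x))^2)"
          using Mh_le_Hf[of n x] by (simp add: \<phi>a_def power_mult_distrib algebra_simps mult_right_mono)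
        then show "ennreal ((Mh n x + 2) * \<phi>a x^2) \<le> ennreal (g^2) * (ennreal (Hf n x * (cmod (\<psi> n x))^2) + 2 * ennreal ((cmod (\<psi> n x))^2))"
        proof -
          assume a: "(Mh n x + 2) * \<phi>a x^2 \<le> g^2 * (Hf n x * (cmod (\<psi> n x))^2 + 2 * (cmod (\<psi> n x))^2)"
          have "ennreal ((Mh n x + 2) * \<phi>a x^2) \<le> ennreal (g^2 * (Hf n x * (cmod (\<psi> n x))^2 + 2 * (cmod (\<psi> n x))^2))"
            using a by (rule ennreal_leI)
          also have "\<dots> = ennreal (g^2) * (ennreal (Hf n x * (cmod (\<psi> n x))^2) + 2 * ennreal ((cmod (\<psi> n x))^2))"
            using Hf_nonneg[of n x] by (simp add: ennreal_mult')
          finally show ?thesis .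
        qed
      qed
      also have "\<dots> = ennreal (g^2) * ((\<integral>\<^sup>+x. ennreal (Hf n x * (cmod (\<psi> n x))^2) \<partial>M n) + 2 * Nsec \<psi> n)"
        unfolding Nsec_def
        by (subst nn_integral_cmult, measurable, subst nn_integral_add, measurable, subst nn_integral_cmult, measurable)
      also have "\<dots> \<le> ennreal (g^2) * (Hsec P \<psi> n + 2 * Nsec \<psi> n)"
        by (intro mult_left_mono add_mono Hn_le) auto
      finally show ?thesis .
    qed
    have B: "(\<integral>\<^sup>+y. ennreal (Hf (Suc (Suc n)) y * \<phi>b y^2) \<partial>M (Suc (Suc n))) \<le> ennreal (g^2) * Hsec P \<psi> (Suc (Suc n))"
    proof -
      have "(\<integral>\<^sup>+y. ennreal (Hf (Suc (Suc n)) y * \<phi>b y^2) \<partial>M (Suc (Suc n)))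
          = (\<integral>\<^sup>+y. ennreal (g^2) * ennreal (Hf (Suc (Suc n)) y * (cmod (\<psi> (Suc (Suc n)) y))^2) \<partial>M (Suc (Suc n)))"
        by (intro nn_integral_cong) (simp add: \<phi>b_def power_mult_distrib ennreal_mult[symmetric] Hf_nonneg mult_ac)
      also have "\<dots> = ennreal (g^2) * (\<integral>\<^sup>+y. ennreal (Hf (Suc (Suc n)) y * (cmod (\<psi> (Suc (Suc n)) y))^2) \<partial>M (Suc (Suc n)))"
        by (rule nn_integral_cmult) measurable
      also have "\<dots> \<le> ennreal (g^2) * Hsec P \<psi> (Suc (Suc n))"
        by (intro mult_left_mono Hn_le) auto
      finally show ?thesis .
    qed
    have "DG * (\<integral>\<^sup>+x. ennreal ((Mh n x + 2) * \<phi>a x^2) \<partial>M n) / 2 + (\<integral>\<^sup>+y. ennreal (Hf (Suc (Suc n)) y * \<phi>b y^2) \<partial>M (Suc (Suc n)))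
       \<le> DG * (ennreal (g^2) * (Hsec P \<psi> n + 2 * Nsec \<psi> n)) / 2 + ennreal (g^2) * Hsec P \<psi> (Suc (Suc n))"
      by (intro add_mono divide_right_mono_ennreal mult_left_mono A B) auto
    also have "\<dots> = ennreal (g^2) * (DG * (Hsec P \<psi> n + 2 * Nsec \<psi> n) / 2 + Hsec P \<psi> (Suc (Suc n)))"
      by (simp add: distrib_left ennreal_times_divide mult_ac)
    finally show ?thesis .
  qed
  finally show ?thesis .
qed


lemma sum_bound':
  fixes a :: "nat \<Rightarrow> complex"
  assumes le: "\<And>n. ennreal (cmod (a n)) \<le> e n" and S: "(\<Sum>n. e n) \<le> ennreal R" and R: "0 \<le> R"
  shows "\<bar>Re (suminf a)\<bar> \<le> R"
proof -
  have fin: "(\<Sum>n. e n) \<noteq> top" using S by (auto simp: top_unique)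
  have "\<bar>Re (suminf a)\<bar> \<le> enn2real (\<Sum>n. e n)" by (rule sum_bound[OF le fin])
  also have "\<dots> \<le> enn2real (ennreal R)" using S by (intro enn2real_mono) auto
  finally show ?thesis using R by simp
qed

lemma Hsec_shift1: "(\<Sum>n. Hsec P \<psi> (Suc n)) \<le> H0_form P \<psi>"
proof -
  have "(\<Sum>n. Hsec P \<psi> n) = (\<Sum>n. Hsec P \<psi> (n + 1)) + (\<Sum>n<1. Hsec P \<psi> n)"
    by (rule suminf_offset) simp
  then show ?thesis by (simp add: H0_eq)
qed

lemma Hsec_shift2: "(\<Sum>n. Hsec P \<psi> (Suc (Suc n))) \<le> H0_form P \<psi>"
proof -
  have "(\<Sum>n. Hsec P \<psi> n) = (\<Sum>n. Hsec P \<psi> (n + 2)) + (\<Sum>n<2. Hsec P \<psi> n)"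
    by (rule suminf_offset) simp
  then show ?thesis by (simp add: H0_eq)
qed

lemma Nsec_sum: "fock_vec \<psi> \<Longrightarrow> (\<Sum>n. Nsec \<psi> n) = ennreal (fock_normsq \<psi>)"
  unfolding Nsec_def by (rule fock_normsq_eq)

lemma enn_arith:
  fixes D h N :: real
  assumes "0 \<le> D" "0 \<le> h" "0 \<le> N"
  shows "ennreal (D * (h + 2 * N) / 2 + h) = ennreal D * (ennreal h + 2 * ennreal N) / 2 + ennreal h"
proof -
  have a: "ennreal (D * (h + 2 * N) / 2) = ennreal (D * (h + 2 * N)) / 2"
    using divide_ennreal[of "D * (h + 2 * N)" 2] assms by simp
  have b: "ennreal (2 * N) = 2 * ennreal N" using ennreal_mult'[of 2 N] by simp
  have c: "ennreal (D * (h + 2 * N)) = ennreal D * (ennreal h + 2 * ennreal N)"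
    using assms by (simp add: ennreal_mult' b)
  show ?thesis using assms by (simp add: a c)
qed

lemma T1_real:
  assumes fv: "fock_vec \<psi>" and kap: "1 < kappa" and h: "H0_form P \<psi> = ennreal h" "0 \<le> h"
    and D: "DG = ennreal Dr" "0 \<le> Dr"
  shows "\<bar>Re (fock_inner \<psi> (ann (fB g kappa s j) (ann (fB g kappa s j) \<psi>)))\<bar> \<le> g^2 * (Dr * (h + 2 * fock_normsq \<psi>) / 2 + h)"
  unfolding fock_inner_def
proof (rule sum_bound'[OF T1_sec[OF fv kap]])
  let ?N = "fock_normsq \<psi>"
  have Np: "0 \<le> ?N" by (rule fock_normsq_nonneg[OF fv])
  show "0 \<le> g^2 * (Dr * (h + 2 * ?N) / 2 + h)" using h D Np by simp
  have "(\<Sum>n. ennreal (g^2) * (DG * (Hsec P \<psi> n + 2 * Nsec \<psi> n) / 2 + Hsec P \<psi> (Suc (Suc n))))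
      = ennreal (g^2) * (DG * ((\<Sum>n. Hsec P \<psi> n) + 2 * (\<Sum>n. Nsec \<psi> n)) / 2 + (\<Sum>n. Hsec P \<psi> (Suc (Suc n))))"
    by (simp add: suminf_add[symmetric] ennreal_times_divide[symmetric] distrib_left)
  also have "\<dots> \<le> ennreal (g^2) * (DG * (H0_form P \<psi> + 2 * ennreal ?N) / 2 + H0_form P \<psi>)"
    by (intro mult_left_mono add_mono Hsec_shift2 order_refl) (simp_all add: H0_eq Nsec_sum[OF fv])
  also have "\<dots> = ennreal (g^2 * (Dr * (h + 2 * ?N) / 2 + h))"
  proof -
    have e: "ennreal (g^2 * (Dr * (h + 2 * ?N) / 2 + h)) = ennreal (g^2) * ennreal (Dr * (h + 2 * ?N) / 2 + h)"
      by (rule ennreal_mult') simp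
    show ?thesis unfolding e enn_arith[OF D(2) h(2) Np] h(1) D(1) ..
  qed
  finally show "(\<Sum>n. ennreal (g^2) * (DG * (Hsec P \<psi> n + 2 * Nsec \<psi> n) / 2 + Hsec P \<psi> (Suc (Suc n)))) \<le> ennreal (g^2 * (Dr * (h + 2 * ?N) / 2 + h))" .
qed


lemma T3_real:
  assumes fv: "fock_vec \<psi>" and kap: "1 < kappa" and h: "H0_form P \<psi> = ennreal h" "0 \<le> h"
    and C: "CG = ennreal Cr" "0 \<le> Cr"
  shows "\<bar>Re (fock_inner \<psi> (mulPPf P j (ann (fB g kappa s j) \<psi>)))\<bar> \<le> \<bar>g\<bar> * (2 * h + Cr * h) / 2"
  unfolding fock_inner_def
proof (rule sum_bound'[OF T3_sec[OF fv kap]])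
  show "0 \<le> \<bar>g\<bar> * (2 * h + Cr * h) / 2" using h C by simp
  have "(\<Sum>n. (ennreal \<bar>g\<bar> * (2 * Hsec P \<psi> n) + ennreal \<bar>g\<bar> * CG * Hsec P \<psi> (Suc n)) / 2)
      = (ennreal \<bar>g\<bar> * (2 * (\<Sum>n. Hsec P \<psi> n)) + ennreal \<bar>g\<bar> * CG * (\<Sum>n. Hsec P \<psi> (Suc n))) / 2"
    by (simp add: suminf_add[symmetric] mult.assoc)
  also have "\<dots> \<le> (ennreal \<bar>g\<bar> * (2 * H0_form P \<psi>) + ennreal \<bar>g\<bar> * CG * H0_form P \<psi>) / 2"
    by (intro divide_right_mono_ennreal add_mono mult_left_mono Hsec_shift1) (simp_all add: H0_eq)
  also have "\<dots> = ennreal (\<bar>g\<bar> * (2 * h + Cr * h) / 2)"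
  proof -
    have "ennreal (\<bar>g\<bar> * (2 * h + Cr * h) / 2) = ennreal (\<bar>g\<bar> * (2 * h + Cr * h)) / 2"
      using divide_ennreal[of "\<bar>g\<bar> * (2 * h + Cr * h)" 2] h C by simp
    also have "ennreal (\<bar>g\<bar> * (2 * h + Cr * h)) = ennreal \<bar>g\<bar> * (2 * ennreal h) + ennreal \<bar>g\<bar> * ennreal Cr * ennreal h"
      using h C by (simp add: ennreal_mult' ennreal_mult'[of 2] distrib_left mult.assoc)
    finally show ?thesis unfolding h(1) C(1) by simp
  qed
  finally show "(\<Sum>n. (ennreal \<bar>g\<bar> * (2 * Hsec P \<psi> n) + ennreal \<bar>g\<bar> * CG * Hsec P \<psi> (Suc n)) / 2) \<le> ennreal (\<bar>g\<bar> * (2 * h + Cr * h) / 2)" .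
qed

definition RP :: ennreal where
  "RP = (\<integral>\<^sup>+k. ennreal (indicator {k. 0 < norm k \<and> norm k < 2} k * norm k powr (-2)) \<partial>(lborel :: (real^3) measure))"

lemma T4_real:
  assumes fv: "fock_vec \<psi>" and tau: "0 < tau" and L: "Lam < 2" and h: "H0_form P \<psi> = ennreal h" "0 \<le> h"
    and R: "RP = ennreal Rr" "0 \<le> Rr"
  shows "\<bar>Re (fock_inner \<psi> (ann (fPhi tau Lam) \<psi>))\<bar> \<le> (fock_normsq \<psi> + Rr * h) / 2"
  unfolding fock_inner_def
proof (rule sum_bound'[OF T4_sec[OF fv tau]])
  let ?N = "fock_normsq \<psi>"
  let ?CP = "(\<integral>\<^sup>+k. ennreal ((cmod (fPhi tau Lam k))^2 / norm k) \<partial>lborel)"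
  have Np: "0 \<le> ?N" by (rule fock_normsq_nonneg[OF fv])
  show "0 \<le> (?N + Rr * h) / 2" using h R Np by simp
  have CP: "?CP \<le> RP" unfolding RP_def by (rule CPhi_fin[OF tau L])
  have "(\<Sum>n. (Nsec \<psi> n + ?CP * Hsec P \<psi> (Suc n)) / 2) = ((\<Sum>n. Nsec \<psi> n) + ?CP * (\<Sum>n. Hsec P \<psi> (Suc n))) / 2"
    by (simp add: suminf_add[symmetric])
  also have "\<dots> \<le> (ennreal ?N + RP * H0_form P \<psi>) / 2"
    by (intro divide_right_mono_ennreal add_mono mult_mono CP Hsec_shift1) (simp_all add: Nsec_sum[OF fv])
  also have "\<dots> = ennreal ((?N + Rr * h) / 2)"
  proof -
    have "ennreal ((?N + Rr * h) / 2) = ennreal (?N + Rr * h) / 2"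
      using divide_ennreal[of "?N + Rr * h" 2] h R Np by simp
    also have "ennreal (?N + Rr * h) = ennreal ?N + ennreal Rr * ennreal h"
      using h R Np by (simp add: ennreal_mult')
    finally show ?thesis unfolding h(1) R(1) by simp
  qed
  finally show "(\<Sum>n. (Nsec \<psi> n + ?CP * Hsec P \<psi> (Suc n)) / 2) \<le> ennreal ((?N + Rr * h) / 2)" .
qed


lemma sum3_lower:
  fixes f :: "3 \<Rightarrow> real"
  assumes "\<And>j. \<bar>f j\<bar> \<le> B"
  shows "- (3 * B) \<le> (\<Sum>j\<in>UNIV. f j)" and "(\<Sum>j\<in>UNIV. f j) \<le> 3 * B"
proof -
  have l: "- B \<le> f j" "f j \<le> B" for j using abs_le_iff[of "f j" B] assms[of j] by linarith+
  have "(\<Sum>j\<in>(UNIV::3 set). - B) \<le> (\<Sum>j\<in>UNIV. f j)"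
    using l by (intro sum_mono) auto
  then show "- (3 * B) \<le> (\<Sum>j\<in>UNIV. f j)" by simp
  have "(\<Sum>j\<in>UNIV. f j) \<le> (\<Sum>j\<in>(UNIV::3 set). B)"
    using l by (intro sum_mono) auto
  then show "(\<Sum>j\<in>UNIV. f j) \<le> 3 * B" by simp
qed

theorem lemma3p2:
  fixes kappa beta gamma :: real and P :: "real^3"
  assumes "1 < kappa" "kappa < 2" "1 < beta" "0 < gamma" "gamma < 1/2"
  shows "\<exists>ca cb :: real. 0 < ca \<and> 0 < cb \<and>
     (\<forall>(n::nat) (m::nat) (g::real) (psi::fock).
        \<bar>g\<bar> \<le> 1 \<longrightarrow> \<bar>g\<bar> < 1 / ca \<longrightarrow> fock_vec psi \<longrightarrow> H0_form P psi < \<infinity> \<longrightarrow>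
        enn2real (H0_form P psi)
          \<le> 1 / (1 - \<bar>g\<bar> * ca) *
             (Hprime_form g kappa (kappa * beta ^ n) (kappa * gamma ^ m) P psi
              + \<bar>g\<bar> * cb * fock_normsq psi))"
proof -
  have kap: "1 < kappa" and kap2: "kappa < 2" and gam: "0 < gamma" using assms by auto
  define Dr where "Dr = enn2real DG"
  define Cr where "Cr = enn2real CG"
  define Rr where "Rr = enn2real RP"
  have D: "DG = ennreal Dr" "0 \<le> Dr"
    using DG_fin unfolding Dr_def DG_def by (auto simp: ennreal_enn2real_if top.not_eq_extremum)
  have C: "CG = ennreal Cr" "0 \<le> Cr"
    using CG_fin unfolding Cr_def CG_def by (auto simp: ennreal_enn2real_if top.not_eq_extremum)
  have R: "RP = ennreal Rr" "0 \<le> Rr"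
    using R2 unfolding Rr_def RP_def by (auto simp: ennreal_enn2real_if top.not_eq_extremum)
  define ca where "ca = 3 * Dr / 2 + 3 + 3 * (2 + Cr) + Rr + 1"
  define cb where "cb = 3 * Dr + 2"
  have ca: "0 < ca" unfolding ca_def using D C R by simp
  have cb: "0 < cb" unfolding cb_def using D by simp
  show ?thesis
  proof (rule exI[of _ ca], rule exI[of _ cb], intro conjI ca cb allI impI)
    fix n m :: nat and g :: real and psi :: fock
    assume g1: "\<bar>g\<bar> \<le> 1" and gca: "\<bar>g\<bar> < 1 / ca" and fv: "fock_vec psi" and H0: "H0_form P psi < \<infinity>"
    define h where "h = enn2real (H0_form P psi)"
    have h: "H0_form P psi = ennreal h" "0 \<le> h"
      using H0 unfolding h_def by (auto simp: ennreal_enn2real_if top.not_eq_extremum)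
    define N where "N = fock_normsq psi"
    have Np: "0 \<le> N" unfolding N_def by (rule fock_normsq_nonneg[OF fv])
    let ?s = "kappa * beta ^ n" and ?tau = "kappa * gamma ^ m"
    have tau: "0 < ?tau" using kap gam by simp
    let ?f = "\<lambda>j. fB g kappa ?s j"
    have T1: "- (3 * (g^2 * (Dr * (h + 2 * N) / 2 + h))) \<le> (\<Sum>j\<in>UNIV. Re (fock_inner psi (ann (?f j) (ann (?f j) psi))))"
      by (rule sum3_lower(1)) (use T1_real[OF fv kap h D] abs_Re_le_cmod in \<open>auto simp: N_def\<close>)
    have T2: "0 \<le> (\<Sum>j\<in>UNIV. fock_normsq (ann (?f j) psi))"
      by (intro sum_nonneg T2_nonneg[OF fv kap H0])
    have T3: "(\<Sum>j\<in>UNIV. Re (fock_inner psi (mulPPf P j (ann (?f j) psi)))) \<le> 3 * (\<bar>g\<bar> * (2 * h + Cr * h) / 2)"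
      by (rule sum3_lower(2)) (rule T3_real[OF fv kap h C])
    have T4: "\<bar>Re (fock_inner psi (ann (fPhi ?tau kappa) psi))\<bar> \<le> (N + Rr * h) / 2"
      unfolding N_def by (rule T4_real[OF fv tau kap2 h R])
    have T4': "- (\<bar>g\<bar> * (N + Rr * h)) \<le> g * (2 * Re (fock_inner psi (ann (fPhi ?tau kappa) psi)))"
    proof -
      have "\<bar>g * (2 * Re (fock_inner psi (ann (fPhi ?tau kappa) psi)))\<bar> = \<bar>g\<bar> * (2 * \<bar>Re (fock_inner psi (ann (fPhi ?tau kappa) psi))\<bar>)"
        by (simp add: abs_mult)
      also have "\<dots> \<le> \<bar>g\<bar> * (N + Rr * h)" using T4 by (intro mult_left_mono) auto
      finally show ?thesis by (simp add: abs_le_iff)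
    qed
    have g2: "g^2 \<le> \<bar>g\<bar>"
    proof -
      have "g^2 = \<bar>g\<bar> * \<bar>g\<bar>" by (simp add: power2_eq_square abs_mult_self_eq)
      also have "\<dots> \<le> \<bar>g\<bar> * 1" using g1 by (intro mult_left_mono) auto
      finally show ?thesis by simp
    qed
    have T1': "3 * (g^2 * (Dr * (h + 2 * N) / 2 + h)) \<le> 3 * (\<bar>g\<bar> * (Dr * (h + 2 * N) / 2 + h))"
      using g2 D h Np by (intro mult_left_mono mult_right_mono) auto
    have HP: "Hprime_form g kappa ?s ?tau P psi
        = h + (\<Sum>j\<in>UNIV. Re (fock_inner psi (ann (?f j) (ann (?f j) psi))))
            + (\<Sum>j\<in>UNIV. fock_normsq (ann (?f j) psi))
            - 2 * (\<Sum>j\<in>UNIV. Re (fock_inner psi (mulPPf P j (ann (?f j) psi))))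
            + g * (2 * Re (fock_inner psi (ann (fPhi ?tau kappa) psi)))"
      unfolding Hprime_form_def h_def by simp
    define a where "a = \<bar>g\<bar>"
    define Q where "Q = (3 * Dr / 2 + 9 + 3 * Cr + Rr) * h + (3 * Dr + 1) * N"
    have EQ: "3 * (a * (Dr * (h + 2 * N) / 2 + h)) + 2 * (3 * (a * (2 * h + Cr * h) / 2)) + a * (N + Rr * h) = a * Q"
      unfolding Q_def by (simp add: field_simps)
    have HPl: "h - a * Q \<le> Hprime_form g kappa ?s ?tau P psi"
      unfolding HP using T1 T1' T2 T3 T4' EQ unfolding a_def by linarith
    have caQ: "ca * h + cb * N = Q + h + N" unfolding ca_def cb_def Q_def by (simp add: algebra_simps)
    have aQ: "a * Q \<le> a * (ca * h + cb * N)"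
      unfolding caQ using h Np by (intro mult_left_mono) (auto simp: a_def)
    have low: "h * (1 - a * ca) \<le> Hprime_form g kappa ?s ?tau P psi + a * cb * N"
    proof -
      have "h * (1 - a * ca) = h - a * (ca * h + cb * N) + a * cb * N" by (simp add: algebra_simps)
      also have "\<dots> \<le> h - a * Q + a * cb * N" using aQ by linarith
      also have "\<dots> \<le> Hprime_form g kappa ?s ?tau P psi + a * cb * N" using HPl by linarith
      finally show ?thesis .
    qed
    have pos: "0 < 1 - a * ca"
    proof -
      have "a * ca < 1" using gca ca unfolding a_def by (simp add: less_divide_eq)
      then show ?thesis by simp
    qed
    have "h \<le> (Hprime_form g kappa ?s ?tau P psi + a * cb * N) / (1 - a * ca)"
      using low pos by (simp add: pos_le_divide_eq)
    then show "enn2real (H0_form P psi) \<le> 1 / (1 - \<bar>g\<bar> * ca) * (Hprime_form g kappa (kappa * beta ^ n) (kappa * gamma ^ m) P psi + \<bar>g\<bar> * cb * fock_normsq psi)"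
      unfolding a_def h_def N_def by simp
  qed
qed


end
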